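(* Let $[X,d,m]$ be a metric random walk space with invariant and reversible probability measure $\nu$, and assume $\Delta_m$ is ergodic. Then $${\rm gap}(-\Delta_m)=\sup\Big\{\lambda\ge0:\ \lambda\,\mathcal H_m(f)\le\int_X(-\Delta_m f)^2\,d\nu\ \ \text{for all } f\in L^2(X,\nu)\Big\}.$$
   Context: A metric random walk space $[X,d,m]$ is a Polish metric space $(X,d)$ with a family $m=(m_x)_{x\in X}$ of Borel probability measures, $x\mapsto m_x(A)$ Borel measurable, each with finite first moment. A Radon measure $\nu$ is invariant if $\nu(A)=\int_X m_x(A)d\nu(x)$ for all $\nu$-measurable $A$, reversible if $dm_x(y)d\nu(x)=dm_y(x)d\nu(y)$. $\Delta_m f(x)=\int_X(f(y)-f(x))dm_x(y)$; $\Delta_m$ is ergodic if $\Delta_m u=0$ implies $u$ is $\nu$-a.e. constant. $\mathcal H_m(f)=\frac12\iint(f(y)-f(x))^2dm_x(y)d\nu(x)$; ${\rm Var}_\nu(f)=\int_X(f-\int fd\nu)^2d\nu$; ${\rm gap}(-\Delta_m)=\inf\{\mathcal H_m(f)/{\rm Var}_\nu(f): f\in L^2(X,\nu),\ {\rm Var}_\nu(f)\ne0\}$. *)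

theory Defs
  imports "HOL-Probability.Probability"
begin

text \<open>A metric random walk space [X,d,m]: X is the (Polish) type 'a, d = dist,
  m x a Borel probability measure for each x, with x \<mapsto> m x A Borel measurable
  and each m x having finite first moment.\<close>
definition mrw_space :: "('a::polish_space \<Rightarrow> 'a measure) \<Rightarrow> bool" where
  "mrw_space m \<longleftrightarrow>
     (\<forall>x. prob_space (m x) \<and> sets (m x) = sets borel) \<and>
     (\<forall>A\<in>sets borel. (\<lambda>x. emeasure (m x) A) \<in> borel_measurable borel) \<and>
     (\<forall>x. integrable (m x) (\<lambda>y. dist x y))"

definition invariant_measure :: "('a::polish_space \<Rightarrow> 'a measure) \<Rightarrow> 'a measure \<Rightarrow> bool" where
  "invariant_measure m \<nu> \<longleftrightarrow> sets \<nu> = sets borel \<and>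
     (\<forall>A\<in>sets borel. emeasure \<nu> A = (\<integral>\<^sup>+x. emeasure (m x) A \<partial>\<nu>))"

text \<open>Reversibility dm_x(y)d\<nu>(x) = dm_y(x)d\<nu>(y), tested on measurable rectangles A \<times> B.\<close>
definition reversible_measure :: "('a::polish_space \<Rightarrow> 'a measure) \<Rightarrow> 'a measure \<Rightarrow> bool" where
  "reversible_measure m \<nu> \<longleftrightarrow> sets \<nu> = sets borel \<and>
     (\<forall>A\<in>sets borel. \<forall>B\<in>sets borel.
        (\<integral>\<^sup>+x. indicator A x * emeasure (m x) B \<partial>\<nu>) =
        (\<integral>\<^sup>+x. indicator B x * emeasure (m x) A \<partial>\<nu>))"

definition L2 :: "'a::polish_space measure \<Rightarrow> ('a \<Rightarrow> real) \<Rightarrow> bool" where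
  "L2 \<nu> f \<longleftrightarrow> f \<in> borel_measurable \<nu> \<and> integrable \<nu> (\<lambda>x. (f x)^2)"

definition laplacian_m :: "('a::polish_space \<Rightarrow> 'a measure) \<Rightarrow> ('a \<Rightarrow> real) \<Rightarrow> 'a \<Rightarrow> real" where
  "laplacian_m m f x = (\<integral>y. (f y - f x) \<partial>(m x))"

definition ergodic :: "('a::polish_space \<Rightarrow> 'a measure) \<Rightarrow> 'a measure \<Rightarrow> bool" where
  "ergodic m \<nu> \<longleftrightarrow> (\<forall>u. L2 \<nu> u \<and> (AE x in \<nu>. laplacian_m m u x = 0) \<longrightarrow>
                        (\<exists>c. AE x in \<nu>. u x = c))"

definition H_m :: "('a::polish_space \<Rightarrow> 'a measure) \<Rightarrow> 'a measure \<Rightarrow> ('a \<Rightarrow> real) \<Rightarrow> real" where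
  "H_m m \<nu> f = 1/2 * (\<integral>x. (\<integral>y. (f y - f x)^2 \<partial>(m x)) \<partial>\<nu>)"

definition Var_nu :: "'a::polish_space measure \<Rightarrow> ('a \<Rightarrow> real) \<Rightarrow> real" where
  "Var_nu \<nu> f = (\<integral>x. (f x - (\<integral>y. f y \<partial>\<nu>))^2 \<partial>\<nu>)"

text \<open>Spectral gap, valued in extended reals (inf of the empty set = +\<infinity>).\<close>
definition gap :: "('a::polish_space \<Rightarrow> 'a measure) \<Rightarrow> 'a measure \<Rightarrow> ereal" where
  "gap m \<nu> = Inf {ereal (H_m m \<nu> f / Var_nu \<nu> f) | f. L2 \<nu> f \<and> Var_nu \<nu> f \<noteq> 0}"

end

theory Submission
  imports Defs
begin
lemma discr_le:
  fixes A B C :: real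
  assumes "\<And>t. 0 \<le> A - 2*t*B + t^2*C" and "C \<ge> 0"
  shows "B^2 \<le> A*C"
proof (cases "C = 0")
  case True
  show ?thesis
  proof (cases "B = 0")
    case False
    have "0 \<le> A - 2*((A+1)/(2*B))*B" using assms(1)[of "(A+1)/(2*B)"] True by simp
    also have "\<dots> = -1" using False by (simp add: field_simps)
    finally show ?thesis by simp
  qed (use True assms(1)[of 0] in simp)
next
  case False
  with assms(2) have C: "C > 0" by simp
  have "0 \<le> A - 2*(B/C)*B + (B/C)^2*C" by (rule assms)
  also have "\<dots> = A - B^2/C" using C by (simp add: power2_eq_square field_simps)
  finally show ?thesis using C by (simp add: field_simps)
qed

lemma abs_prod_le_sq: "\<bar>a::real\<bar> * \<bar>b\<bar> \<le> a^2 + b^2"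
proof -
  have "0 \<le> (\<bar>a\<bar> - \<bar>b\<bar>)^2" by simp
  also have "\<dots> = a^2 + b^2 - 2*(\<bar>a\<bar>*\<bar>b\<bar>)"
    by (simp add: power2_diff power2_abs)
  finally have "2*(\<bar>a\<bar>*\<bar>b\<bar>) \<le> a^2 + b^2" by simp
  moreover have "0 \<le> \<bar>a\<bar>*\<bar>b\<bar>" by simp
  ultimately show ?thesis by linarith
qed

lemma integrable_mult_L2:
  fixes f g :: "'b \<Rightarrow> real"
  assumes [measurable]: "f \<in> borel_measurable M" "g \<in> borel_measurable M"
    and "integrable M (\<lambda>x. (f x)^2)" "integrable M (\<lambda>x. (g x)^2)"
  shows "integrable M (\<lambda>x. f x * g x)"
proof (rule Bochner_Integration.integrable_bound[of M "\<lambda>x. (f x)^2 + (g x)^2"])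
  show "integrable M (\<lambda>x. (f x)^2 + (g x)^2)" using assms by auto
  show "AE x in M. norm (f x * g x) \<le> norm ((f x)^2 + (g x)^2)"
  proof (intro AE_I2)
    fix x
    have "\<bar>f x\<bar> * \<bar>g x\<bar> \<le> (f x)^2 + (g x)^2" by (rule abs_prod_le_sq)
    then show "norm (f x * g x) \<le> norm ((f x)^2 + (g x)^2)" by (simp add: abs_mult)
  qed
qed simp

lemma CS_gen:
  fixes f g :: "'b \<Rightarrow> real"
  assumes [measurable]: "f \<in> borel_measurable M" "g \<in> borel_measurable M"
    and fi: "integrable M (\<lambda>x. (f x)^2)" and gi: "integrable M (\<lambda>x. (g x)^2)"
  shows "(\<integral>x. f x * g x \<partial>M)^2 \<le> (\<integral>x. (f x)^2 \<partial>M) * (\<integral>x. (g x)^2 \<partial>M)"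
proof (rule discr_le)
  have fg: "integrable M (\<lambda>x. f x * g x)" by (rule integrable_mult_L2) (use assms in auto)
  fix t :: real
  have "0 \<le> (\<integral>x. (f x - t * g x)^2 \<partial>M)" by simp
  also have "(\<integral>x. (f x - t * g x)^2 \<partial>M) = (\<integral>x. (f x)^2 - 2*t*(f x * g x) + t^2 * (g x)^2 \<partial>M)"
    by (rule Bochner_Integration.integral_cong) (auto simp: power2_eq_square algebra_simps)
  also have "\<dots> = (\<integral>x. (f x)^2 \<partial>M) - 2*t*(\<integral>x. f x * g x \<partial>M) + t^2*(\<integral>x. (g x)^2 \<partial>M)"
    using fi gi fg by simp
  finally show "0 \<le> (\<integral>x. (f x)^2 \<partial>M) - 2*t*(\<integral>x. f x * g x \<partial>M) + t^2*(\<integral>x. (g x)^2 \<partial>M)" .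
qed simp

locale MRW =
  fixes m :: "'a::polish_space \<Rightarrow> 'a measure" and \<nu> :: "'a measure"
  assumes mrw: "mrw_space m" and P: "prob_space \<nu>" and inv: "invariant_measure m \<nu>"
    and rev: "reversible_measure m \<nu>"
begin

lemma sets_nu[measurable_cong]: "sets \<nu> = sets borel"
  using inv unfolding invariant_measure_def by simp

lemma space_nu[simp]: "space \<nu> = UNIV"
  using sets_eq_imp_space_eq[OF sets_nu] by simp

lemma prob_m: "prob_space (m x)" and sets_m[measurable_cong]: "sets (m x) = sets borel"
  using mrw unfolding mrw_space_def by auto

lemma space_m[simp]: "space (m x) = UNIV"
  using sets_eq_imp_space_eq[OF sets_m] by simp

lemma kernel_sub: "m \<in> borel \<rightarrow>\<^sub>M subprob_algebra borel"
  by (rule measurable_subprob_algebra)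
     (use mrw prob_m in \<open>auto simp: mrw_space_def intro: prob_space_imp_subprob_space\<close>)

lemma kernel: "m \<in> borel \<rightarrow>\<^sub>M prob_algebra borel"
  by (rule measurable_prob_algebraI) (use prob_m kernel_sub in auto)

lemma kernel_nu_sub[measurable]: "m \<in> \<nu> \<rightarrow>\<^sub>M subprob_algebra borel"
  using kernel_sub by (simp cong: measurable_cong_sets)

lemma kernel_nu[measurable]: "m \<in> \<nu> \<rightarrow>\<^sub>M prob_algebra borel"
  using kernel by (simp cong: measurable_cong_sets)

lemma bind_nu: "\<nu> \<bind> m = \<nu>"
proof (rule measure_eqI)
  show "sets (\<nu> \<bind> m) = sets \<nu>"
    by (subst sets_bind[where N=borel]) (auto simp: sets_m sets_nu)
  fix A assume "A \<in> sets (\<nu> \<bind> m)"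
  then have A: "A \<in> sets borel" by (subst (asm) sets_bind[where N=borel]) (auto simp: sets_m)
  have "emeasure (\<nu> \<bind> m) A = (\<integral>\<^sup>+x. emeasure (m x) A \<partial>\<nu>)"
    by (rule emeasure_bind[OF _ kernel_nu_sub A]) simp
  also have "\<dots> = emeasure \<nu> A" using inv A unfolding invariant_measure_def by simp
  finally show "emeasure (\<nu> \<bind> m) A = emeasure \<nu> A" .
qed

lemma nn_inv:
  assumes [measurable]: "g \<in> borel_measurable borel"
  shows "(\<integral>\<^sup>+x. (\<integral>\<^sup>+y. g y \<partial>m x) \<partial>\<nu>) = (\<integral>\<^sup>+y. g y \<partial>\<nu>)"
proof -
  have "(\<integral>\<^sup>+y. g y \<partial>\<nu>) = (\<integral>\<^sup>+y. g y \<partial>(\<nu> \<bind> m))" by (simp add: bind_nu)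
  also have "\<dots> = (\<integral>\<^sup>+x. (\<integral>\<^sup>+y. g y \<partial>m x) \<partial>\<nu>)"
    by (rule nn_integral_bind[OF _ kernel_nu_sub]) simp
  finally show ?thesis by simp
qed

definition J :: "('a \<times> 'a) measure" where
  "J = \<nu> \<bind> (\<lambda>x. distr (m x) (borel \<Otimes>\<^sub>M borel) (Pair x))"

lemma kJ_sub: "(\<lambda>x. distr (m x) (borel \<Otimes>\<^sub>M borel) (Pair x)) \<in> \<nu> \<rightarrow>\<^sub>M subprob_algebra (borel \<Otimes>\<^sub>M borel)"
proof -
  have "(\<lambda>x. distr (m x) (borel \<Otimes>\<^sub>M borel) (Pair x)) \<in> \<nu> \<rightarrow>\<^sub>M prob_algebra (borel \<Otimes>\<^sub>M borel)"
    by (rule measurable_distr_prob_space2[OF kernel_nu]) simp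
  then show ?thesis by (rule measurable_prob_algebraD)
qed

lemma sets_J[measurable_cong]: "sets J = sets (borel \<Otimes>\<^sub>M borel)"
  unfolding J_def by (subst sets_bind[where N="borel \<Otimes>\<^sub>M borel"]) auto

lemma space_J[simp]: "space J = UNIV"
  using sets_eq_imp_space_eq[OF sets_J] by (simp add: space_pair_measure)

lemma nn_J:
  assumes [measurable]: "h \<in> borel_measurable (borel \<Otimes>\<^sub>M borel)"
  shows "(\<integral>\<^sup>+z. h z \<partial>J) = (\<integral>\<^sup>+x. (\<integral>\<^sup>+y. h (x,y) \<partial>m x) \<partial>\<nu>)"
proof -
  have "(\<integral>\<^sup>+z. h z \<partial>J) = (\<integral>\<^sup>+x. (\<integral>\<^sup>+z. h z \<partial>distr (m x) (borel \<Otimes>\<^sub>M borel) (Pair x)) \<partial>\<nu>)"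
    unfolding J_def by (rule nn_integral_bind[OF _ kJ_sub]) simp
  also have "\<dots> = (\<integral>\<^sup>+x. (\<integral>\<^sup>+y. h (x,y) \<partial>m x) \<partial>\<nu>)"
    by (intro nn_integral_cong, subst nn_integral_distr) (auto simp: measurable_cong_sets[OF sets_m refl])
  finally show ?thesis .
qed

end

context MRW begin

lemma emeasure_J_rect:
  assumes A: "A \<in> sets borel" and B: "B \<in> sets borel"
  shows "emeasure J (A \<times> B) = (\<integral>\<^sup>+x. indicator A x * emeasure (m x) B \<partial>\<nu>)"
proof -
  have [measurable]: "A \<in> sets borel" "B \<in> sets borel" using A B by auto
  have "emeasure J (A \<times> B) = (\<integral>\<^sup>+z. indicator (A \<times> B) z \<partial>J)"
    by (rule nn_integral_indicator[symmetric]) (simp add: sets_J)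
  also have "\<dots> = (\<integral>\<^sup>+x. (\<integral>\<^sup>+y. indicator (A \<times> B) (x,y) \<partial>m x) \<partial>\<nu>)"
    by (rule nn_J) simp
  also have "\<dots> = (\<integral>\<^sup>+x. indicator A x * emeasure (m x) B \<partial>\<nu>)"
    by (intro nn_integral_cong) (simp add: indicator_times nn_integral_cmult sets_m)
  finally show ?thesis .
qed

lemma J_swap: "distr J (borel \<Otimes>\<^sub>M borel) (\<lambda>(x,y). (y,x)) = J"
proof (rule measure_eqI_generator_eq[OF Int_stable_pair_measure_generator[of "borel::'a measure" "borel::'a measure"], where \<Omega>=UNIV and A="\<lambda>_. UNIV"])
  show "{a \<times> b |a b. a \<in> sets (borel::'a measure) \<and> b \<in> sets (borel::'a measure)} \<subseteq> Pow UNIV" by auto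
  show "sets (distr J (borel \<Otimes>\<^sub>M borel) (\<lambda>(x, y). (y, x))) = sigma_sets UNIV {a \<times> b |a b. a \<in> sets (borel::'a measure) \<and> b \<in> sets (borel::'a measure)}"
    by (simp add: sets_pair_measure)
  show "sets J = sigma_sets UNIV {a \<times> b |a b. a \<in> sets (borel::'a measure) \<and> b \<in> sets (borel::'a measure)}"
    by (simp add: sets_J sets_pair_measure)
  have "(UNIV::('a\<times>'a) set) = UNIV \<times> UNIV \<and> (UNIV::'a set) \<in> sets borel" by simp
  then show "range (\<lambda>_. UNIV) \<subseteq> {a \<times> b |a b. a \<in> sets (borel::'a measure) \<and> b \<in> sets (borel::'a measure)}"
    apply (clarsimp)
    apply (rule exI[of _ "UNIV::'a set"], rule exI[of _ "UNIV::'a set"])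
    apply simp
    done
  show "(\<Union>i. UNIV) = UNIV" by simp
  have "emeasure J UNIV = 1"
    using emeasure_J_rect[of UNIV UNIV] prob_space.emeasure_space_1[OF prob_m] prob_space.emeasure_space_1[OF P]
    by simp
  then show "emeasure (distr J (borel \<Otimes>\<^sub>M borel) (\<lambda>(x, y). (y, x))) UNIV \<noteq> \<infinity>"
    using sets.top[of "borel \<Otimes>\<^sub>M (borel::'a measure)"]
    by (subst emeasure_distr) (auto simp: space_pair_measure)
  fix X assume "X \<in> {a \<times> b |a b. a \<in> sets (borel::'a measure) \<and> b \<in> sets (borel::'a measure)}"
  then obtain A B where X: "X = A \<times> B" and A: "A \<in> sets borel" and B: "B \<in> sets borel" by auto
  have "(\<lambda>(x, y). (y, x)) -` (A \<times> B) \<inter> space J = B \<times> A" by auto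
  then have "emeasure (distr J (borel \<Otimes>\<^sub>M borel) (\<lambda>(x, y). (y, x))) X = emeasure J (B \<times> A)"
    using A B X by (subst emeasure_distr) (auto simp: measurable_cong_sets[OF sets_J refl])
  also have "\<dots> = (\<integral>\<^sup>+x. indicator B x * emeasure (m x) A \<partial>\<nu>)" by (rule emeasure_J_rect[OF B A])
  also have "\<dots> = (\<integral>\<^sup>+x. indicator A x * emeasure (m x) B \<partial>\<nu>)"
    using rev A B unfolding reversible_measure_def by simp
  also have "\<dots> = emeasure J X" using emeasure_J_rect[OF A B] X by simp
  finally show "emeasure (distr J (borel \<Otimes>\<^sub>M borel) (\<lambda>(x, y). (y, x))) X = emeasure J X" .
qed

lemma J_snd: "distr J borel snd = \<nu>"
proof (rule measure_eqI)
  show "sets (distr J borel snd) = sets \<nu>" by (simp add: sets_nu)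
  fix A assume "A \<in> sets (distr J borel snd)"
  then have A: "A \<in> sets borel" by simp
  have "snd -` A \<inter> space J = UNIV \<times> A" by auto
  then have "emeasure (distr J borel snd) A = emeasure J (UNIV \<times> A)"
    using A by (subst emeasure_distr) (auto simp: measurable_cong_sets[OF sets_J refl])
  also have "\<dots> = (\<integral>\<^sup>+x. emeasure (m x) A \<partial>\<nu>)" using emeasure_J_rect[OF _ A] by simp
  also have "\<dots> = emeasure \<nu> A" using inv A unfolding invariant_measure_def by simp
  finally show "emeasure (distr J borel snd) A = emeasure \<nu> A" .
qed

lemma J_fst: "distr J borel fst = \<nu>"
proof (rule measure_eqI)
  show "sets (distr J borel fst) = sets \<nu>" by (simp add: sets_nu)
  fix A assume "A \<in> sets (distr J borel fst)"
  then have A: "A \<in> sets borel" by simp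
  have "fst -` A \<inter> space J = A \<times> UNIV" by auto
  then have "emeasure (distr J borel fst) A = emeasure J (A \<times> UNIV)"
    using A by (subst emeasure_distr) (auto simp: measurable_cong_sets[OF sets_J refl])
  also have "\<dots> = (\<integral>\<^sup>+x. indicator A x \<partial>\<nu>)"
    using emeasure_J_rect[OF A, of UNIV] prob_space.emeasure_space_1[OF prob_m] by simp
  also have "\<dots> = emeasure \<nu> A" using A by (simp add: sets_nu)
  finally show "emeasure (distr J borel fst) A = emeasure \<nu> A" .
qed

lemma prob_J: "prob_space J"
proof -
  have "emeasure J UNIV = 1"
    using emeasure_J_rect[of UNIV UNIV] prob_space.emeasure_space_1[OF prob_m] prob_space.emeasure_space_1[OF P]
    by simp
  then show ?thesis by (intro prob_spaceI) simp
qed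

end

context MRW begin

lemma meas_kint:
  fixes h :: "'a \<times> 'a \<Rightarrow> real"
  assumes h[measurable]: "h \<in> borel_measurable (borel \<Otimes>\<^sub>M borel)"
  shows "(\<lambda>x. \<integral>y. h (x,y) \<partial>m x) \<in> borel_measurable \<nu>"
proof -
  have "(\<lambda>x. \<integral>z. h z \<partial>distr (m x) (borel \<Otimes>\<^sub>M borel) (Pair x)) \<in> borel_measurable \<nu>"
    by (rule measurable_compose[OF kJ_sub integral_measurable_subprob_algebra[OF h]])
  moreover have "(\<integral>z. h z \<partial>distr (m x) (borel \<Otimes>\<^sub>M borel) (Pair x)) = (\<integral>y. h (x,y) \<partial>m x)" for x
    by (subst integral_distr) (auto simp: measurable_cong_sets[OF sets_m refl])
  ultimately show ?thesis by simp
qed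

lemma KEY:
  fixes h :: "'a \<times> 'a \<Rightarrow> real"
  assumes hi: "integrable J h"
  shows "AE x in \<nu>. integrable (m x) (\<lambda>y. h (x,y))"
    and "integrable \<nu> (\<lambda>x. \<integral>y. h (x,y) \<partial>m x)"
    and "(\<integral>z. h z \<partial>J) = (\<integral>x. (\<integral>y. h (x,y) \<partial>m x) \<partial>\<nu>)"
proof -
  have hm[measurable]: "h \<in> borel_measurable (borel \<Otimes>\<^sub>M borel)"
    using borel_measurable_integrable[OF hi] by (simp cong: measurable_cong_sets add: sets_J)
  have hmx[measurable]: "(\<lambda>y. h (x,y)) \<in> borel_measurable (m x)" for x
    by (simp cong: measurable_cong_sets add: sets_m)
  define Pp where "Pp x = (\<integral>\<^sup>+y. ennreal (h (x,y)) \<partial>m x)" for x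
  define Nn where "Nn x = (\<integral>\<^sup>+y. ennreal (- h (x,y)) \<partial>m x)" for x
  define Aa where "Aa x = (\<integral>\<^sup>+y. ennreal (norm (h (x,y))) \<partial>m x)" for x
  have [measurable]: "Pp \<in> borel_measurable \<nu>" "Nn \<in> borel_measurable \<nu>" "Aa \<in> borel_measurable \<nu>"
    unfolding Pp_def Nn_def Aa_def
    by (simp_all add: measurable_cong_sets[OF sets_nu refl])
       (intro nn_integral_measurable_subprob_algebra2[OF _ kernel_sub], measurable)+
  have fin: "(\<integral>\<^sup>+z. ennreal (norm (h z)) \<partial>J) < \<infinity>"
    using hi by (simp add: integrable_iff_bounded)
  have "(\<integral>\<^sup>+x. Aa x \<partial>\<nu>) = (\<integral>\<^sup>+z. ennreal (norm (h z)) \<partial>J)"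
    unfolding Aa_def by (rule nn_J[symmetric]) simp
  with fin have Aafin: "AE x in \<nu>. Aa x < \<infinity>"
    by (intro finite_nn_integral_imp_ae_finite) auto
  then show ae_int: "AE x in \<nu>. integrable (m x) (\<lambda>y. h (x,y))"
    by eventually_elim (simp add: integrable_iff_bounded Aa_def)
  have PJ: "(\<integral>\<^sup>+x. Pp x \<partial>\<nu>) = (\<integral>\<^sup>+z. ennreal (h z) \<partial>J)"
    unfolding Pp_def by (rule nn_J[symmetric]) simp
  have NJ: "(\<integral>\<^sup>+x. Nn x \<partial>\<nu>) = (\<integral>\<^sup>+z. ennreal (- h z) \<partial>J)"
    unfolding Nn_def by (rule nn_J[symmetric]) simp
  have "(\<integral>\<^sup>+z. ennreal (h z) \<partial>J) \<le> (\<integral>\<^sup>+z. ennreal (norm (h z)) \<partial>J)"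
    by (intro nn_integral_mono) (simp add: ennreal_leI)
  with fin PJ have Pfin: "(\<integral>\<^sup>+x. Pp x \<partial>\<nu>) < \<infinity>" by simp
  have "(\<integral>\<^sup>+z. ennreal (- h z) \<partial>J) \<le> (\<integral>\<^sup>+z. ennreal (norm (h z)) \<partial>J)"
    by (intro nn_integral_mono) (simp add: ennreal_leI)
  with fin NJ have Nfin: "(\<integral>\<^sup>+x. Nn x \<partial>\<nu>) < \<infinity>" by simp
  have Pae: "AE x in \<nu>. Pp x < \<infinity>" using Pfin by (intro finite_nn_integral_imp_ae_finite) auto
  have Nae: "AE x in \<nu>. Nn x < \<infinity>" using Nfin by (intro finite_nn_integral_imp_ae_finite) auto
  have eqP: "(\<integral>\<^sup>+x. ennreal (enn2real (Pp x)) \<partial>\<nu>) = (\<integral>\<^sup>+x. Pp x \<partial>\<nu>)"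
    using Pae by (intro nn_integral_cong_AE) (auto simp: less_top)
  have eqN: "(\<integral>\<^sup>+x. ennreal (enn2real (Nn x)) \<partial>\<nu>) = (\<integral>\<^sup>+x. Nn x \<partial>\<nu>)"
    using Nae by (intro nn_integral_cong_AE) (auto simp: less_top)
  have ip: "integrable \<nu> (\<lambda>x. enn2real (Pp x))"
    by (rule integrableI_nonneg) (use eqP Pfin in auto)
  have in_: "integrable \<nu> (\<lambda>x. enn2real (Nn x))"
    by (rule integrableI_nonneg) (use eqN Nfin in auto)
  have aeq: "AE x in \<nu>. (\<integral>y. h (x,y) \<partial>m x) = enn2real (Pp x) - enn2real (Nn x)"
    using ae_int by eventually_elim (simp add: real_lebesgue_integral_def Pp_def Nn_def)
  have km: "(\<lambda>x. \<integral>y. h (x,y) \<partial>m x) \<in> borel_measurable \<nu>" by (rule meas_kint[OF hm])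
  show "integrable \<nu> (\<lambda>x. \<integral>y. h (x,y) \<partial>m x)"
    using integrable_cong_AE[OF km _ aeq] ip in_ by auto
  have "(\<integral>x. (\<integral>y. h (x,y) \<partial>m x) \<partial>\<nu>) = (\<integral>x. enn2real (Pp x) - enn2real (Nn x) \<partial>\<nu>)"
    by (rule integral_cong_AE[OF km _ aeq]) simp
  also have "\<dots> = (\<integral>x. enn2real (Pp x) \<partial>\<nu>) - (\<integral>x. enn2real (Nn x) \<partial>\<nu>)"
    using ip in_ by simp
  also have "(\<integral>x. enn2real (Pp x) \<partial>\<nu>) = enn2real (\<integral>\<^sup>+z. ennreal (h z) \<partial>J)"
    by (subst integral_eq_nn_integral) (auto simp: eqP PJ)
  also have "(\<integral>x. enn2real (Nn x) \<partial>\<nu>) = enn2real (\<integral>\<^sup>+z. ennreal (- h z) \<partial>J)"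
    by (subst integral_eq_nn_integral) (auto simp: eqN NJ)
  also have "enn2real (\<integral>\<^sup>+z. ennreal (h z) \<partial>J) - enn2real (\<integral>\<^sup>+z. ennreal (- h z) \<partial>J) = (\<integral>z. h z \<partial>J)"
    by (rule real_lebesgue_integral_def[OF hi, symmetric])
  finally show "(\<integral>z. h z \<partial>J) = (\<integral>x. (\<integral>y. h (x,y) \<partial>m x) \<partial>\<nu>)" by simp
qed

end

lemma sq_int_lin:
  fixes f g :: "'b \<Rightarrow> real"
  assumes [measurable]: "f \<in> borel_measurable M" "g \<in> borel_measurable M"
    and fi: "integrable M (\<lambda>x. (f x)^2)" and gi: "integrable M (\<lambda>x. (g x)^2)"
  shows "integrable M (\<lambda>x. (a * f x + b * g x)^2)"
proof -
  have fg: "integrable M (\<lambda>x. f x * g x)" by (rule integrable_mult_L2) (use assms in auto)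
  have "integrable M (\<lambda>x. a^2 * (f x)^2 + (2*a*b) * (f x * g x) + b^2 * (g x)^2)"
    by (intro Bochner_Integration.integrable_add integrable_mult_right fi gi fg)
  moreover have "(\<lambda>x. a^2 * (f x)^2 + (2*a*b) * (f x * g x) + b^2 * (g x)^2) = (\<lambda>x. (a * f x + b * g x)^2)"
    by (rule ext) (simp add: power2_eq_square algebra_simps)
  ultimately show ?thesis by simp
qed

lemma jensen_sq:
  fixes f :: "'b \<Rightarrow> real"
  assumes "prob_space M" and [measurable]: "f \<in> borel_measurable M" and fi: "integrable M (\<lambda>x. (f x)^2)"
  shows "(\<integral>x. f x \<partial>M)^2 \<le> (\<integral>x. (f x)^2 \<partial>M)"
proof -
  interpret prob_space M by fact
  have "(\<integral>x. f x * 1 \<partial>M)^2 \<le> (\<integral>x. (f x)^2 \<partial>M) * (\<integral>x. 1^2 \<partial>M)"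
    by (rule CS_gen) (use assms in simp_all)
  then show ?thesis using prob_space.prob_space[OF assms(1)] by simp
qed

context MRW begin

lemma finite_nu: "finite_measure \<nu>" using P by (simp add: prob_space_def)

definition ip :: "('a \<Rightarrow> real) \<Rightarrow> ('a \<Rightarrow> real) \<Rightarrow> real" where
  "ip u v = (\<integral>x. u x * v x \<partial>\<nu>)"

definition Mop :: "('a \<Rightarrow> real) \<Rightarrow> 'a \<Rightarrow> real" where
  "Mop u = (\<lambda>x. \<integral>y. u y \<partial>m x)"

lemma L2_meas: "L2 \<nu> u \<Longrightarrow> u \<in> borel_measurable borel"
  unfolding L2_def by (simp cong: measurable_cong_sets add: sets_nu)

lemma L2_sq: "L2 \<nu> u \<Longrightarrow> integrable \<nu> (\<lambda>x. (u x)^2)"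
  unfolding L2_def by simp

lemma L2_int: "L2 \<nu> u \<Longrightarrow> integrable \<nu> u"
  using finite_measure.square_integrable_imp_integrable[OF finite_nu, of u] unfolding L2_def by blast

lemma L2_lin: "L2 \<nu> u \<Longrightarrow> L2 \<nu> v \<Longrightarrow> L2 \<nu> (\<lambda>x. a * u x + b * v x)"
  unfolding L2_def by (auto intro!: sq_int_lin)

lemma L2_const: "L2 \<nu> (\<lambda>x. c)"
  unfolding L2_def using finite_measure.integrable_const[OF finite_nu] by auto

lemma L2_cong: "L2 \<nu> u \<Longrightarrow> (\<And>x. u x = v x) \<Longrightarrow> L2 \<nu> v"
proof -
  assume "L2 \<nu> u" "\<And>x. u x = v x"
  moreover have "u = v" using \<open>\<And>x. u x = v x\<close> by (rule ext)
  ultimately show ?thesis by simp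
qed

lemma L2_diff: "L2 \<nu> u \<Longrightarrow> L2 \<nu> v \<Longrightarrow> L2 \<nu> (\<lambda>x. u x - v x)"
  using L2_lin[of u v 1 "-1"] by simp

lemma L2_add: "L2 \<nu> u \<Longrightarrow> L2 \<nu> v \<Longrightarrow> L2 \<nu> (\<lambda>x. u x + v x)"
  using L2_lin[of u v 1 1] by simp

lemma L2_scale: "L2 \<nu> u \<Longrightarrow> L2 \<nu> (\<lambda>x. a * u x)"
  using L2_lin[of u u a 0] by simp

lemma ip_int: "L2 \<nu> u \<Longrightarrow> L2 \<nu> v \<Longrightarrow> integrable \<nu> (\<lambda>x. u x * v x)"
  unfolding L2_def by (intro integrable_mult_L2) auto

lemma ip_sym: "ip u v = ip v u"
  unfolding ip_def by (simp add: mult.commute)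

lemma ip_lin: "L2 \<nu> u \<Longrightarrow> L2 \<nu> v \<Longrightarrow> L2 \<nu> w \<Longrightarrow>
   ip (\<lambda>x. a * u x + b * v x) w = a * ip u w + b * ip v w"
proof -
  assume u: "L2 \<nu> u" and v: "L2 \<nu> v" and w: "L2 \<nu> w"
  have "ip (\<lambda>x. a * u x + b * v x) w = (\<integral>x. a * (u x * w x) + b * (v x * w x) \<partial>\<nu>)"
    unfolding ip_def by (simp add: algebra_simps)
  also have "\<dots> = a * ip u w + b * ip v w"
    unfolding ip_def using ip_int[OF u w] ip_int[OF v w] by simp
  finally show ?thesis .
qed

lemma ip_nonneg: "0 \<le> ip u u"
  unfolding ip_def by simp

lemma ip_CS: "L2 \<nu> u \<Longrightarrow> L2 \<nu> v \<Longrightarrow> (ip u v)^2 \<le> ip u u * ip v v"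
  unfolding ip_def L2_def using CS_gen[of u \<nu> v] by (simp add: power2_eq_square)

lemma ip_cong_AE: "L2 \<nu> u \<Longrightarrow> L2 \<nu> u' \<Longrightarrow> L2 \<nu> v \<Longrightarrow> AE x in \<nu>. u x = u' x \<Longrightarrow> ip u v = ip u' v"
  unfolding ip_def L2_def by (rule integral_cong_AE) auto

end

context MRW begin

lemma fst_J[measurable]: "fst \<in> J \<rightarrow>\<^sub>M borel" and snd_J[measurable]: "snd \<in> J \<rightarrow>\<^sub>M borel"
  by (simp_all cong: measurable_cong_sets add: sets_J)

lemma J_fst_int:
  fixes g :: "'a \<Rightarrow> real"
  assumes g: "g \<in> borel_measurable borel"
  shows "integrable J (\<lambda>z. g (fst z)) \<longleftrightarrow> integrable \<nu> g"
    and "(\<integral>z. g (fst z) \<partial>J) = (\<integral>x. g x \<partial>\<nu>)"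
proof -
  show "integrable J (\<lambda>z. g (fst z)) \<longleftrightarrow> integrable \<nu> g"
    using integrable_distr_eq[OF fst_J g] J_fst by simp
  show "(\<integral>z. g (fst z) \<partial>J) = (\<integral>x. g x \<partial>\<nu>)"
    using integral_distr[OF fst_J g] J_fst by simp
qed

lemma J_snd_int:
  fixes g :: "'a \<Rightarrow> real"
  assumes g: "g \<in> borel_measurable borel"
  shows "integrable J (\<lambda>z. g (snd z)) \<longleftrightarrow> integrable \<nu> g"
    and "(\<integral>z. g (snd z) \<partial>J) = (\<integral>x. g x \<partial>\<nu>)"
proof -
  show "integrable J (\<lambda>z. g (snd z)) \<longleftrightarrow> integrable \<nu> g"
    using integrable_distr_eq[OF snd_J g] J_snd by simp
  show "(\<integral>z. g (snd z) \<partial>J) = (\<integral>x. g x \<partial>\<nu>)"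
    using integral_distr[OF snd_J g] J_snd by simp
qed

lemma swap_J[measurable]: "(\<lambda>(x,y). (y,x)) \<in> J \<rightarrow>\<^sub>M borel \<Otimes>\<^sub>M borel"
  by (simp cong: measurable_cong_sets add: sets_J)

lemma J_swap_int:
  fixes h :: "'a \<times> 'a \<Rightarrow> real"
  assumes h: "h \<in> borel_measurable (borel \<Otimes>\<^sub>M borel)"
  shows "(\<integral>z. h (snd z, fst z) \<partial>J) = (\<integral>z. h z \<partial>J)"
proof -
  have "(\<integral>z. h z \<partial>J) = (\<integral>z. h z \<partial>distr J (borel \<Otimes>\<^sub>M borel) (\<lambda>(x,y). (y,x)))"
    by (simp add: J_swap)
  also have "\<dots> = (\<integral>z. h ((\<lambda>(x,y). (y,x)) z) \<partial>J)"
    by (rule integral_distr[OF swap_J h])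
  also have "\<dots> = (\<integral>z. h (snd z, fst z) \<partial>J)"
    by (rule Bochner_Integration.integral_cong) (auto simp: case_prod_beta)
  finally show ?thesis by simp
qed

lemma L2_fstJ: "L2 \<nu> u \<Longrightarrow> integrable J (\<lambda>z. (u (fst z))^2)"
  using J_fst_int(1)[of "\<lambda>x. (u x)^2"] L2_meas[of u] L2_sq[of u] by simp

lemma L2_sndJ: "L2 \<nu> u \<Longrightarrow> integrable J (\<lambda>z. (u (snd z))^2)"
  using J_snd_int(1)[of "\<lambda>x. (u x)^2"] L2_meas[of u] L2_sq[of u] by simp

lemma L2_sndJ1: "L2 \<nu> u \<Longrightarrow> integrable J (\<lambda>z. u (snd z))"
  using J_snd_int(1)[of "u"] L2_meas[of u] L2_int[of u] by simp

lemma meas_fstJ: "L2 \<nu> u \<Longrightarrow> (\<lambda>z. u (fst z)) \<in> borel_measurable J"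
  using L2_meas[of u] by simp
lemma meas_sndJ: "L2 \<nu> u \<Longrightarrow> (\<lambda>z. u (snd z)) \<in> borel_measurable J"
  using L2_meas[of u] by simp

lemma ae_int_m: "L2 \<nu> u \<Longrightarrow> AE x in \<nu>. integrable (m x) u"
  using KEY(1)[OF L2_sndJ1[of u]] by simp

lemma ae_int_m2: "L2 \<nu> u \<Longrightarrow> AE x in \<nu>. integrable (m x) (\<lambda>y. (u y)^2)"
  using KEY(1)[OF L2_sndJ[of u]] by simp

lemma Mop_meas: "L2 \<nu> u \<Longrightarrow> Mop u \<in> borel_measurable \<nu>"
  unfolding Mop_def using meas_kint[of "\<lambda>z. u (snd z)"] L2_meas[of u] by simp

lemma Mop_L2: assumes u: "L2 \<nu> u" shows "L2 \<nu> (Mop u)" and "ip (Mop u) (Mop u) \<le> ip u u"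
proof -
  have um[measurable]: "u \<in> borel_measurable borel" using L2_meas[OF u] .
  have k2: "integrable \<nu> (\<lambda>x. \<integral>y. (u y)^2 \<partial>m x)"
    using KEY(2)[OF L2_sndJ[OF u]] by simp
  have k3: "(\<integral>x. (\<integral>y. (u y)^2 \<partial>m x) \<partial>\<nu>) = ip u u"
    using KEY(3)[OF L2_sndJ[OF u]] J_snd_int(2)[of "\<lambda>x. (u x)^2"]
    by (simp add: ip_def power2_eq_square)
  have bnd: "AE x in \<nu>. (Mop u x)^2 \<le> (\<integral>y. (u y)^2 \<partial>m x)"
    using ae_int_m2[OF u] by eventually_elim
      (unfold Mop_def, rule jensen_sq[OF prob_m], auto simp: measurable_cong_sets[OF sets_m refl])
  have mm: "Mop u \<in> borel_measurable \<nu>" by (rule Mop_meas[OF u])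
  have i: "integrable \<nu> (\<lambda>x. (Mop u x)^2)"
    by (rule Bochner_Integration.integrable_bound[OF k2]) (use mm bnd in auto)
  then show "L2 \<nu> (Mop u)" unfolding L2_def using mm by simp
  have "ip (Mop u) (Mop u) = (\<integral>x. (Mop u x)^2 \<partial>\<nu>)" by (simp add: ip_def power2_eq_square)
  also have "\<dots> \<le> (\<integral>x. (\<integral>y. (u y)^2 \<partial>m x) \<partial>\<nu>)"
    by (rule integral_mono_AE[OF i k2 bnd])
  finally show "ip (Mop u) (Mop u) \<le> ip u u" using k3 by simp
qed

lemma ip_Mop_J: assumes u: "L2 \<nu> u" and v: "L2 \<nu> v"
  shows "ip u (Mop v) = (\<integral>z. u (fst z) * v (snd z) \<partial>J)"
proof -
  have hi: "integrable J (\<lambda>z. u (fst z) * v (snd z))"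
    by (rule integrable_mult_L2[OF meas_fstJ[OF u] meas_sndJ[OF v] L2_fstJ[OF u] L2_sndJ[OF v]])
  have "(\<integral>z. u (fst z) * v (snd z) \<partial>J) = (\<integral>x. (\<integral>y. u x * v y \<partial>m x) \<partial>\<nu>)"
    using KEY(3)[OF hi] by simp
  also have "\<dots> = ip u (Mop v)" unfolding ip_def Mop_def by simp
  finally show ?thesis by simp
qed

lemma Mop_adj: assumes u: "L2 \<nu> u" and v: "L2 \<nu> v"
  shows "ip u (Mop v) = ip v (Mop u)"
proof -
  have [measurable]: "u \<in> borel_measurable borel" "v \<in> borel_measurable borel"
    using L2_meas u v by auto
  have "ip u (Mop v) = (\<integral>z. u (fst z) * v (snd z) \<partial>J)" by (rule ip_Mop_J[OF u v])
  also have "\<dots> = (\<integral>z. u (snd z) * v (fst z) \<partial>J)"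
    using J_swap_int[of "\<lambda>z. u (fst z) * v (snd z)"] by simp
  also have "\<dots> = ip v (Mop u)" using ip_Mop_J[OF v u] by (simp add: mult.commute)
  finally show ?thesis .
qed

lemma Mop_mean: assumes u: "L2 \<nu> u" shows "(\<integral>x. Mop u x \<partial>\<nu>) = (\<integral>x. u x \<partial>\<nu>)"
  using KEY(3)[OF L2_sndJ1[OF u]] J_snd_int(2)[OF L2_meas[OF u]] unfolding Mop_def by simp

lemma Mop_lin: assumes u: "L2 \<nu> u" and v: "L2 \<nu> v"
  shows "AE x in \<nu>. Mop (\<lambda>y. a * u y + b * v y) x = a * Mop u x + b * Mop v x"
  using ae_int_m[OF u] ae_int_m[OF v] by eventually_elim (simp add: Mop_def)

end

context MRW begin

definition Dop :: "('a \<Rightarrow> real) \<Rightarrow> 'a \<Rightarrow> real" where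
  "Dop u = (\<lambda>x. u x - Mop u x)"

definition Q :: "('a \<Rightarrow> real) \<Rightarrow> ('a \<Rightarrow> real) \<Rightarrow> real" where
  "Q u v = ip u v - ip u (Mop v)"

lemma Dop_L2: "L2 \<nu> u \<Longrightarrow> L2 \<nu> (Dop u)"
  unfolding Dop_def by (intro L2_diff Mop_L2)

lemma ip_diff: "L2 \<nu> u \<Longrightarrow> L2 \<nu> v \<Longrightarrow> L2 \<nu> w \<Longrightarrow> ip (\<lambda>x. u x - v x) w = ip u w - ip v w"
  using ip_lin[of u v w 1 "-1"] by simp

lemma ip_add: "L2 \<nu> u \<Longrightarrow> L2 \<nu> v \<Longrightarrow> L2 \<nu> w \<Longrightarrow> ip (\<lambda>x. u x + v x) w = ip u w + ip v w"
  using ip_lin[of u v w 1 1] by simp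

lemma ip_scale: "L2 \<nu> u \<Longrightarrow> L2 \<nu> w \<Longrightarrow> ip (\<lambda>x. a * u x) w = a * ip u w"
  using ip_lin[of u u w a 0] by simp

lemma Q_J: assumes u: "L2 \<nu> u" and v: "L2 \<nu> v"
  shows "Q u v = 1/2 * (\<integral>z. (u (snd z) - u (fst z)) * (v (snd z) - v (fst z)) \<partial>J)"
proof -
  have [measurable]: "u \<in> borel_measurable borel" "v \<in> borel_measurable borel"
    using L2_meas u v by auto
  have i1: "integrable J (\<lambda>z. u (snd z) * v (snd z))"
    by (rule integrable_mult_L2[OF meas_sndJ[OF u] meas_sndJ[OF v] L2_sndJ[OF u] L2_sndJ[OF v]])
  have i2: "integrable J (\<lambda>z. u (snd z) * v (fst z))"
    by (rule integrable_mult_L2[OF meas_sndJ[OF u] meas_fstJ[OF v] L2_sndJ[OF u] L2_fstJ[OF v]])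
  have i3: "integrable J (\<lambda>z. u (fst z) * v (snd z))"
    by (rule integrable_mult_L2[OF meas_fstJ[OF u] meas_sndJ[OF v] L2_fstJ[OF u] L2_sndJ[OF v]])
  have i4: "integrable J (\<lambda>z. u (fst z) * v (fst z))"
    by (rule integrable_mult_L2[OF meas_fstJ[OF u] meas_fstJ[OF v] L2_fstJ[OF u] L2_fstJ[OF v]])
  have e1: "(\<integral>z. u (snd z) * v (snd z) \<partial>J) = ip u v"
    using J_snd_int(2)[of "\<lambda>x. u x * v x"] by (simp add: ip_def)
  have e4: "(\<integral>z. u (fst z) * v (fst z) \<partial>J) = ip u v"
    using J_fst_int(2)[of "\<lambda>x. u x * v x"] by (simp add: ip_def)
  have e3: "(\<integral>z. u (fst z) * v (snd z) \<partial>J) = ip u (Mop v)"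
    using ip_Mop_J[OF u v] by simp
  have e2: "(\<integral>z. u (snd z) * v (fst z) \<partial>J) = ip u (Mop v)"
    using ip_Mop_J[OF v u] Mop_adj[OF u v] by (simp add: mult.commute)
  have "(\<integral>z. (u (snd z) - u (fst z)) * (v (snd z) - v (fst z)) \<partial>J)
      = (\<integral>z. u (snd z) * v (snd z) - u (snd z) * v (fst z) - u (fst z) * v (snd z) + u (fst z) * v (fst z) \<partial>J)"
    by (simp add: algebra_simps)
  also have "\<dots> = (\<integral>z. u (snd z) * v (snd z) \<partial>J) - (\<integral>z. u (snd z) * v (fst z) \<partial>J)
     - (\<integral>z. u (fst z) * v (snd z) \<partial>J) + (\<integral>z. u (fst z) * v (fst z) \<partial>J)"
    using i1 i2 i3 i4 by simp
  also have "\<dots> = 2 * Q u v" using e1 e2 e3 e4 by (simp add: Q_def)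
  finally show ?thesis by simp
qed

lemma Q_nonneg: "L2 \<nu> u \<Longrightarrow> 0 \<le> Q u u"
proof -
  assume u: "L2 \<nu> u"
  have "0 \<le> (\<integral>z. (u (snd z) - u (fst z)) * (u (snd z) - u (fst z)) \<partial>J)"
    by (rule Bochner_Integration.integral_nonneg) simp
  then show ?thesis using Q_J[OF u u] by linarith
qed

lemma Q_CS: assumes u: "L2 \<nu> u" and v: "L2 \<nu> v" shows "(Q u v)^2 \<le> Q u u * Q v v"
proof -
  have [measurable]: "u \<in> borel_measurable borel" "v \<in> borel_measurable borel"
    using L2_meas u v by auto
  define F where "F z = u (snd z) - u (fst z)" for z
  define G where "G z = v (snd z) - v (fst z)" for z
  have Fm: "F \<in> borel_measurable J" and Gm: "G \<in> borel_measurable J" unfolding F_def G_def by simp_all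
  have Fi: "integrable J (\<lambda>z. (F z)^2)"
    using sq_int_lin[OF meas_sndJ[OF u] meas_fstJ[OF u] L2_sndJ[OF u] L2_fstJ[OF u], of 1 "-1"]
    by (simp add: F_def)
  have Gi: "integrable J (\<lambda>z. (G z)^2)"
    using sq_int_lin[OF meas_sndJ[OF v] meas_fstJ[OF v] L2_sndJ[OF v] L2_fstJ[OF v], of 1 "-1"]
    by (simp add: G_def)
  have e1: "(\<integral>z. F z * G z \<partial>J) = 2 * Q u v" using Q_J[OF u v] unfolding F_def G_def by linarith
  have e2: "(\<integral>z. (F z)^2 \<partial>J) = 2 * Q u u" using Q_J[OF u u] unfolding F_def power2_eq_square by linarith
  have e3: "(\<integral>z. (G z)^2 \<partial>J) = 2 * Q v v" using Q_J[OF v v] unfolding G_def power2_eq_square by linarith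
  have "(2 * Q u v)^2 \<le> (2 * Q u u) * (2 * Q v v)"
    using CS_gen[OF Fm Gm Fi Gi] unfolding e1 e2 e3 .
  then have "4 * (Q u v)^2 \<le> 4 * (Q u u * Q v v)" by (simp add: power_mult_distrib algebra_simps)
  then show ?thesis by simp
qed

lemma Q_D: assumes u: "L2 \<nu> u" and v: "L2 \<nu> v" shows "ip (Dop u) v = Q u v"
proof -
  have "ip (Dop u) v = ip u v - ip (Mop u) v"
    unfolding Dop_def by (rule ip_diff[OF u Mop_L2(1)[OF u] v])
  also have "ip (Mop u) v = ip u (Mop v)" using Mop_adj[OF u v] by (simp add: ip_sym)
  finally show ?thesis by (simp add: Q_def)
qed

lemma Q_sym: "L2 \<nu> u \<Longrightarrow> L2 \<nu> v \<Longrightarrow> Q u v = Q v u"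
  unfolding Q_def using Mop_adj by (simp add: ip_sym)

lemma H_eq: assumes u: "L2 \<nu> u" shows "H_m m \<nu> u = Q u u"
proof -
  have [measurable]: "u \<in> borel_measurable borel" using L2_meas u by auto
  have hi: "integrable J (\<lambda>z. (u (snd z) - u (fst z))^2)"
    using sq_int_lin[OF meas_sndJ[OF u] meas_fstJ[OF u] L2_sndJ[OF u] L2_fstJ[OF u], of 1 "-1"]
    by simp
  have "H_m m \<nu> u = 1/2 * (\<integral>z. (u (snd z) - u (fst z))^2 \<partial>J)"
    unfolding H_m_def using KEY(3)[OF hi] by simp
  then show ?thesis using Q_J[OF u u] by (simp add: power2_eq_square)
qed

lemma lap_eq: assumes u: "L2 \<nu> u" shows "(\<integral>x. (laplacian_m m u x)^2 \<partial>\<nu>) = ip (Dop u) (Dop u)"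
proof -
  have [measurable]: "u \<in> borel_measurable borel" using L2_meas u by auto
  have lm: "laplacian_m m u \<in> borel_measurable \<nu>"
    unfolding laplacian_m_def[abs_def] using meas_kint[of "\<lambda>z. u (snd z) - u (fst z)"] by simp
  have ae: "AE x in \<nu>. laplacian_m m u x = - Dop u x"
    using ae_int_m[OF u]
  proof eventually_elim
    case (elim x)
    interpret prob_space "m x" by (rule prob_m)
    have "laplacian_m m u x = (\<integral>y. u y \<partial>m x) - (\<integral>y. u x \<partial>m x)"
      unfolding laplacian_m_def using elim by (intro Bochner_Integration.integral_diff) auto
    moreover have "prob UNIV = 1" using prob_space by simp
    ultimately show ?case by (simp add: Dop_def Mop_def)
  qed
  have "(\<integral>x. (laplacian_m m u x)^2 \<partial>\<nu>) = (\<integral>x. (Dop u x)^2 \<partial>\<nu>)"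
    using ae Dop_L2[OF u] lm by (intro integral_cong_AE) (auto simp: L2_def)
  then show ?thesis by (simp add: ip_def power2_eq_square)
qed

lemma Var_eq: "Var_nu \<nu> u = ip (\<lambda>x. u x - (\<integral>y. u y \<partial>\<nu>)) (\<lambda>x. u x - (\<integral>y. u y \<partial>\<nu>))"
  unfolding Var_nu_def ip_def by (simp add: power2_eq_square)

lemma Dop_mean: assumes u: "L2 \<nu> u" shows "(\<integral>x. Dop u x \<partial>\<nu>) = 0"
  unfolding Dop_def using Mop_mean[OF u] L2_int[OF u] L2_int[OF Mop_L2(1)[OF u]] by simp

end

context MRW begin

definition Top :: "('a \<Rightarrow> real) \<Rightarrow> 'a \<Rightarrow> real" where
  "Top a = (\<lambda>x. (a x + Mop a x) / 2)"

primrec Tn :: "nat \<Rightarrow> ('a \<Rightarrow> real) \<Rightarrow> 'a \<Rightarrow> real" where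
  "Tn 0 g = g"
| "Tn (Suc n) g = Top (Tn n g)"

lemma Top_eq: "Top a = (\<lambda>x. (1/2) * a x + (1/2) * Mop a x)"
  unfolding Top_def by (rule ext) simp

lemma Top_L2: "L2 \<nu> a \<Longrightarrow> L2 \<nu> (Top a)"
  unfolding Top_eq by (intro L2_lin Mop_L2)

lemma Tn_L2: "L2 \<nu> g \<Longrightarrow> L2 \<nu> (Tn n g)"
  by (induction n) (auto intro: Top_L2)

lemma ip_Top: "L2 \<nu> a \<Longrightarrow> L2 \<nu> w \<Longrightarrow> ip (Top a) w = (ip a w + ip (Mop a) w) / 2"
  unfolding Top_eq using ip_lin[of a "Mop a" w "1/2" "1/2"] Mop_L2(1)[of a] by simp

lemma Top_adj: "L2 \<nu> a \<Longrightarrow> L2 \<nu> w \<Longrightarrow> ip (Top a) w = ip a (Top w)"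
proof -
  assume a: "L2 \<nu> a" and w: "L2 \<nu> w"
  have "ip (Top a) w = (ip a w + ip (Mop a) w) / 2" by (rule ip_Top[OF a w])
  moreover have "ip a (Top w) = (ip w a + ip (Mop w) a) / 2"
    using ip_Top[OF w a] by (simp add: ip_sym)
  moreover have "ip (Mop a) w = ip (Mop w) a"
    using Mop_adj[OF a w] by (simp add: ip_sym)
  ultimately show ?thesis by (simp add: ip_sym)
qed

lemma Top_mean: "L2 \<nu> a \<Longrightarrow> (\<integral>x. Top a x \<partial>\<nu>) = (\<integral>x. a x \<partial>\<nu>)"
proof -
  assume a: "L2 \<nu> a"
  have "(\<integral>x. Top a x \<partial>\<nu>) = (\<integral>x. (1/2) * a x + (1/2) * Mop a x \<partial>\<nu>)" by (simp add: Top_eq)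
  also have "\<dots> = (1/2) * (\<integral>x. a x \<partial>\<nu>) + (1/2) * (\<integral>x. Mop a x \<partial>\<nu>)"
    using L2_int[OF a] L2_int[OF Mop_L2(1)[OF a]] by simp
  finally show ?thesis using Mop_mean[OF a] by simp
qed

lemma Tn_mean: "L2 \<nu> g \<Longrightarrow> (\<integral>x. Tn n g x \<partial>\<nu>) = (\<integral>x. g x \<partial>\<nu>)"
  by (induction n) (auto simp: Top_mean Tn_L2)

lemma Dop_Tn: "Dop (Tn n g) = (\<lambda>x. 2 * (Tn n g x - Tn (Suc n) g x))"
  by (rule ext) (simp add: Dop_def Top_def field_simps)

lemma ip_Tn: "L2 \<nu> g \<Longrightarrow> ip (Tn i g) (Tn j g) = ip g (Tn (i + j) g)"
proof (induction i arbitrary: j)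
  case 0 then show ?case by simp
next
  case (Suc i)
  have "ip (Tn (Suc i) g) (Tn j g) = ip (Tn i g) (Tn (Suc j) g)"
    using Top_adj[OF Tn_L2[OF Suc.prems, of i] Tn_L2[OF Suc.prems, of j]] by simp
  also have "\<dots> = ip g (Tn (i + Suc j) g)" by (rule Suc.IH[OF Suc.prems])
  finally show ?case by simp
qed

lemma ip_Mop_self: assumes w: "L2 \<nu> w"
  shows "\<bar>ip w (Mop w)\<bar> \<le> ip w w" and "ip (Mop w) (Mop w) \<le> ip w w"
proof -
  show C: "ip (Mop w) (Mop w) \<le> ip w w" by (rule Mop_L2(2)[OF w])
  have "(ip w (Mop w))^2 \<le> ip w w * ip (Mop w) (Mop w)" by (rule ip_CS[OF w Mop_L2(1)[OF w]])
  also have "\<dots> \<le> ip w w * ip w w" using C ip_nonneg[of w] by (intro mult_left_mono) auto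
  finally have "(ip w (Mop w))^2 \<le> (ip w w)^2" by (simp add: power2_eq_square)
  then have "\<bar>ip w (Mop w)\<bar> \<le> \<bar>ip w w\<bar>" using abs_le_square_iff by blast
  then show "\<bar>ip w (Mop w)\<bar> \<le> ip w w" using ip_nonneg[of w] by simp
qed

context
  fixes g assumes g: "L2 \<nu> g"
begin

definition bb :: "nat \<Rightarrow> real" where "bb k = ip g (Tn k g)"

lemma bb_ip: "ip (Tn i g) (Tn j g) = bb (i + j)"
  unfolding bb_def by (rule ip_Tn[OF g])

lemma bb_step: "bb (Suc k) \<le> bb k \<and> 0 \<le> bb k"
proof -
  have "\<exists>j. k = 2*j \<or> k = 2*j + 1" by presburger
  then obtain j where k: "k = 2*j \<or> k = 2*j + 1" by blast
  define w where "w = Tn j g"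
  have w: "L2 \<nu> w" unfolding w_def by (rule Tn_L2[OF g])
  have Mw: "L2 \<nu> (Mop w)" by (rule Mop_L2(1)[OF w])
  define A where "A = ip w w"
  define B where "B = ip w (Mop w)"
  define C where "C = ip (Mop w) (Mop w)"
  have AB: "\<bar>B\<bar> \<le> A" and CA: "C \<le> A" unfolding A_def B_def C_def using ip_Mop_self[OF w] by auto
  have b0: "bb (2*j) = A" unfolding A_def w_def using bb_ip[of j j] by (simp add: mult_2)
  have b1: "bb (2*j+1) = (A + B) / 2"
  proof -
    have "bb (2*j+1) = ip (Tn (Suc j) g) w" unfolding w_def using bb_ip[of "Suc j" j] by (simp add: mult_2)
    also have "\<dots> = (ip w w + ip (Mop w) w) / 2" using ip_Top[OF w w] by (simp add: w_def)
    finally show ?thesis by (simp add: A_def B_def ip_sym)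
  qed
  have b2: "bb (2*j+2) = (A + 2*B + C) / 4"
  proof -
    have "bb (2*j+2) = ip (Top w) (Top w)" unfolding w_def using bb_ip[of "Suc j" "Suc j"] by (simp add: mult_2)
    also have "\<dots> = (ip w (Top w) + ip (Mop w) (Top w)) / 2" by (rule ip_Top[OF w Top_L2[OF w]])
    also have "ip w (Top w) = (A + B) / 2"
      using ip_Top[OF w w] by (simp add: A_def B_def ip_sym)
    also have "ip (Mop w) (Top w) = (B + C) / 2"
      using ip_Top[OF w Mw] by (simp add: B_def C_def ip_sym)
    finally show ?thesis by (simp add: field_simps)
  qed
  from k show ?thesis
  proof
    assume "k = 2*j"
    then have e1: "bb (Suc k) = (A + B) / 2" and e2: "bb k = A" using b0 b1 by simp_all
    have "B \<le> A" "- B \<le> A" using AB by auto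
    then have "bb (Suc k) \<le> bb k" "0 \<le> bb k" unfolding e1 e2 by (auto simp: field_simps)
    then show ?thesis by simp
  next
    assume "k = 2*j+1"
    then have e1: "bb (Suc k) = (A + 2*B + C) / 4" and e2: "bb k = (A + B) / 2" using b1 b2
      by (simp_all add: numeral_eq_Suc)
    have "B \<le> A" "- B \<le> A" using AB by auto
    then have "bb (Suc k) \<le> bb k" "0 \<le> bb k" unfolding e1 e2 using CA by (auto simp: field_simps)
    then show ?thesis by simp
  qed
qed

lemma bb_dec: "decseq bb"
  using bb_step by (intro decseq_SucI) auto

lemma bb_nonneg: "0 \<le> bb k" using bb_step by auto

lemma bb_conv: obtains \<beta> where "bb \<longlonglongrightarrow> \<beta>"
  using decseq_convergent[OF bb_dec, of 0] bb_nonneg by blast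

lemma ip_Tn_diff: "ip (\<lambda>x. Tn i g x - Tn j g x) (\<lambda>x. Tn i g x - Tn j g x) = bb (2*i) - 2 * bb (i+j) + bb (2*j)"
proof -
  have Li: "L2 \<nu> (Tn i g)" and Lj: "L2 \<nu> (Tn j g)" using Tn_L2[OF g] by auto
  have Ld: "L2 \<nu> (\<lambda>x. Tn i g x - Tn j g x)" by (rule L2_diff[OF Li Lj])
  have e1: "ip (\<lambda>x. Tn i g x - Tn j g x) (\<lambda>x. Tn i g x - Tn j g x)
       = ip (Tn i g) (\<lambda>x. Tn i g x - Tn j g x) - ip (Tn j g) (\<lambda>x. Tn i g x - Tn j g x)"
    by (rule ip_diff[OF Li Lj Ld])
  have e2: "ip (Tn i g) (\<lambda>x. Tn i g x - Tn j g x) = ip (Tn i g) (Tn i g) - ip (Tn j g) (Tn i g)"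
    using ip_diff[OF Li Lj Li] ip_sym[of "Tn i g"] ip_sym[of "Tn j g" "Tn i g"] by metis
  have e3: "ip (Tn j g) (\<lambda>x. Tn i g x - Tn j g x) = ip (Tn i g) (Tn j g) - ip (Tn j g) (Tn j g)"
    using ip_diff[OF Li Lj Lj] ip_sym[of "Tn j g"] by metis
  have f1: "ip (Tn i g) (Tn i g) = bb (2*i)" using bb_ip[of i i] by (simp add: mult_2)
  have f2: "ip (Tn j g) (Tn j g) = bb (2*j)" using bb_ip[of j j] by (simp add: mult_2)
  have f3: "ip (Tn i g) (Tn j g) = bb (i+j)" using bb_ip[of i j] by simp
  have f4: "ip (Tn j g) (Tn i g) = bb (i+j)" using bb_ip[of j i] by (simp add: add.commute)
  show ?thesis using e1 e2 e3 f1 f2 f3 f4 by linarith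
qed

end
end

context MRW begin

lemma L1_le_L2:
  assumes d: "L2 \<nu> d"
  shows "(\<integral>x. norm (d x) \<partial>\<nu>)^2 \<le> ip d d"
proof -
  have [measurable]: "d \<in> borel_measurable borel" by (rule L2_meas[OF d])
  have "(\<integral>x. \<bar>d x\<bar> \<partial>\<nu>)^2 \<le> (\<integral>x. (\<bar>d x\<bar>)^2 \<partial>\<nu>)"
    by (rule jensen_sq[OF P]) (use L2_sq[OF d] in simp_all)
  then show ?thesis by (simp add: ip_def power2_eq_square)
qed

context
  fixes g assumes g: "L2 \<nu> g"
begin

lemma L2_cauchy:
  assumes lim: "bb g \<longlonglongrightarrow> \<beta>" and e: "e > 0"
  shows "\<exists>N. \<forall>i\<ge>N. \<forall>j\<ge>N. ip (\<lambda>x. Tn i g x - Tn j g x) (\<lambda>x. Tn i g x - Tn j g x) < e"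
proof -
  from lim e obtain N where N: "\<And>n. n \<ge> N \<Longrightarrow> \<bar>bb g n - \<beta>\<bar> < e/4"
    unfolding LIMSEQ_def dist_real_def by (metis divide_pos_pos zero_less_numeral)
  show ?thesis
  proof (intro exI allI impI)
    fix i j assume i: "i \<ge> N" and j: "j \<ge> N"
    have a: "\<bar>bb g (2*i) - \<beta>\<bar> < e/4" "\<bar>bb g (i+j) - \<beta>\<bar> < e/4" "\<bar>bb g (2*j) - \<beta>\<bar> < e/4"
      using N i j by auto
    have "ip (\<lambda>x. Tn i g x - Tn j g x) (\<lambda>x. Tn i g x - Tn j g x) = bb g (2*i) - 2 * bb g (i+j) + bb g (2*j)"
      by (rule ip_Tn_diff[OF g])
    also have "\<dots> < e" using a unfolding abs_less_iff by linarith
    finally show "ip (\<lambda>x. Tn i g x - Tn j g x) (\<lambda>x. Tn i g x - Tn j g x) < e" .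
  qed
qed

lemma limit_fun:
  obtains r u where "strict_mono r" "L2 \<nu> u"
    "(\<lambda>k. ip (\<lambda>x. Tn (r k) g x - u x) (\<lambda>x. Tn (r k) g x - u x)) \<longlonglongrightarrow> 0"
proof -
  obtain \<beta> where lim: "bb g \<longlonglongrightarrow> \<beta>" using bb_conv[OF g] by blast
  define s where "s n = Tn n g" for n
  have sL2: "L2 \<nu> (s n)" for n unfolding s_def by (rule Tn_L2[OF g])
  have sm[measurable]: "s n \<in> borel_measurable \<nu>" for n using sL2[of n] by (simp add: L2_def)
  have dL2: "L2 \<nu> (\<lambda>x. s i x - s j x)" for i j by (rule L2_diff[OF sL2 sL2])
  have cau: "\<exists>N. \<forall>i\<ge>N. \<forall>j\<ge>N. ip (\<lambda>x. s i x - s j x) (\<lambda>x. s i x - s j x) < e" if "e > 0" for e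
    unfolding s_def by (rule L2_cauchy[OF lim that])
  have cau1: "\<exists>N. \<forall>i\<ge>N. \<forall>j\<ge>N. (\<integral>x. norm (s i x - s j x) \<partial>\<nu>) < e" if e: "e > 0" for e
  proof -
    obtain N where N: "\<And>i j. i \<ge> N \<Longrightarrow> j \<ge> N \<Longrightarrow> ip (\<lambda>x. s i x - s j x) (\<lambda>x. s i x - s j x) < e^2"
      using cau[of "e^2"] e by auto
    show ?thesis
    proof (intro exI allI impI)
      fix i j assume "i \<ge> N" "j \<ge> N"
      then have "(\<integral>x. norm (s i x - s j x) \<partial>\<nu>)^2 < e^2"
        using L1_le_L2[OF dL2[of i j]] N[of i j] by linarith
      moreover have "0 \<le> (\<integral>x. norm (s i x - s j x) \<partial>\<nu>)" by simp
      ultimately show "(\<integral>x. norm (s i x - s j x) \<partial>\<nu>) < e"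
        using e by (simp add: power_less_imp_less_base)
    qed
  qed
  obtain r where r: "strict_mono r" and aec: "AE x in \<nu>. Cauchy (\<lambda>i. s (r i) x)"
    using cauchy_L1_AE_cauchy_subseq[where s=s and M=\<nu>] cau1 L2_int[OF sL2] by blast
  define u where "u x = lim (\<lambda>i. s (r i) x)" for x
  have um[measurable]: "u \<in> borel_measurable \<nu>" unfolding u_def by measurable
  have ulim: "AE x in \<nu>. (\<lambda>i. s (r i) x) \<longlonglongrightarrow> u x"
    using aec by eventually_elim (simp add: u_def Cauchy_convergent_iff convergent_LIMSEQ_iff)
  have fatou: "\<exists>N. \<forall>k\<ge>N. (\<integral>\<^sup>+x. ennreal ((s (r k) x - u x)^2) \<partial>\<nu>) \<le> ennreal e" if e: "e > 0" for e
  proof -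
    obtain N where N: "\<And>i j. i \<ge> N \<Longrightarrow> j \<ge> N \<Longrightarrow> ip (\<lambda>x. s i x - s j x) (\<lambda>x. s i x - s j x) < e"
      using cau[OF e] by auto
    show ?thesis
    proof (intro exI allI impI)
      fix k assume k: "k \<ge> N"
      have rk: "r k \<ge> N" using seq_suble[OF r, of k] k by simp
      define F where "F j x = ennreal ((s (r k) x - s (r j) x)^2)" for j x
      have Fm: "F j \<in> borel_measurable \<nu>" for j unfolding F_def by measurable
      have aeF: "AE x in \<nu>. ennreal ((s (r k) x - u x)^2) = liminf (\<lambda>j. F j x)"
        using ulim
      proof eventually_elim
        case (elim x)
        have "(\<lambda>j. F j x) \<longlonglongrightarrow> ennreal ((s (r k) x - u x)^2)"
          unfolding F_def by (intro tendsto_ennrealI tendsto_intros elim)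
        then show ?case by (simp add: lim_imp_Liminf)
      qed
      have IF: "(\<integral>\<^sup>+x. F j x \<partial>\<nu>) = ennreal (ip (\<lambda>x. s (r k) x - s (r j) x) (\<lambda>x. s (r k) x - s (r j) x))" for j
      proof -
        have "integrable \<nu> (\<lambda>x. (s (r k) x - s (r j) x)^2)" using L2_sq[OF dL2[of "r k" "r j"]] .
        then have "(\<integral>\<^sup>+x. F j x \<partial>\<nu>) = ennreal (\<integral>x. (s (r k) x - s (r j) x)^2 \<partial>\<nu>)"
          unfolding F_def by (intro nn_integral_eq_integral) auto
        then show ?thesis by (simp add: ip_def power2_eq_square)
      qed
      have "(\<integral>\<^sup>+x. ennreal ((s (r k) x - u x)^2) \<partial>\<nu>) = (\<integral>\<^sup>+x. liminf (\<lambda>j. F j x) \<partial>\<nu>)"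
        by (rule nn_integral_cong_AE[OF aeF])
      also have "\<dots> \<le> liminf (\<lambda>j. \<integral>\<^sup>+x. F j x \<partial>\<nu>)"
        by (rule nn_integral_liminf[OF Fm])
      also have "\<dots> \<le> liminf (\<lambda>j. ennreal e)"
      proof (rule Liminf_mono)
        show "\<forall>\<^sub>F j in sequentially. (\<integral>\<^sup>+x. F j x \<partial>\<nu>) \<le> ennreal e"
          unfolding eventually_sequentially
        proof (intro exI allI impI)
          fix j assume "j \<ge> N"
          then have "r j \<ge> N" using seq_suble[OF r, of j] by simp
          then show "(\<integral>\<^sup>+x. F j x \<partial>\<nu>) \<le> ennreal e"
            unfolding IF using N[OF rk] by (intro ennreal_leI) (simp add: less_imp_le)
        qed
      qed
      also have "\<dots> = ennreal e" by (simp add: Liminf_const)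
      finally show "(\<integral>\<^sup>+x. ennreal ((s (r k) x - u x)^2) \<partial>\<nu>) \<le> ennreal e" .
    qed
  qed
  have diffi: "\<exists>N. \<forall>k\<ge>N. integrable \<nu> (\<lambda>x. (s (r k) x - u x)^2) \<and>
      (\<integral>x. (s (r k) x - u x)^2 \<partial>\<nu>) \<le> e" if e: "e > 0" for e
  proof -
    obtain N where N: "\<And>k. k \<ge> N \<Longrightarrow> (\<integral>\<^sup>+x. ennreal ((s (r k) x - u x)^2) \<partial>\<nu>) \<le> ennreal e"
      using fatou[OF e] by auto
    show ?thesis
    proof (intro exI allI impI conjI)
      fix k assume k: "k \<ge> N"
      show "integrable \<nu> (\<lambda>x. (s (r k) x - u x)^2)"
        by (rule integrableI_nonneg) (use N[OF k] in \<open>auto simp: top_unique intro: le_less_trans\<close>)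
      have "(\<integral>x. (s (r k) x - u x)^2 \<partial>\<nu>) = enn2real (\<integral>\<^sup>+x. ennreal ((s (r k) x - u x)^2) \<partial>\<nu>)"
        by (rule integral_eq_nn_integral) auto
      also have "\<dots> \<le> e" using N[OF k] e by (intro enn2real_leI) auto
      finally show "(\<integral>x. (s (r k) x - u x)^2 \<partial>\<nu>) \<le> e" .
    qed
  qed
  obtain N1 where N1: "\<And>k. k \<ge> N1 \<Longrightarrow> integrable \<nu> (\<lambda>x. (s (r k) x - u x)^2)"
    using diffi[of 1] by auto
  have uL2: "L2 \<nu> u"
  proof -
    have "integrable \<nu> (\<lambda>x. (1 * s (r N1) x + (-1) * (s (r N1) x - u x))^2)"
      by (rule sq_int_lin) (use N1[of N1] L2_sq[OF sL2] in auto)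
    then have "integrable \<nu> (\<lambda>x. (u x)^2)" by simp
    then show ?thesis unfolding L2_def by simp
  qed
  have "(\<lambda>k. ip (\<lambda>x. s (r k) x - u x) (\<lambda>x. s (r k) x - u x)) \<longlonglongrightarrow> 0"
  proof (rule LIMSEQ_I)
    fix e :: real assume e: "e > 0"
    obtain N where N: "\<And>k. k \<ge> N \<Longrightarrow> (\<integral>x. (s (r k) x - u x)^2 \<partial>\<nu>) \<le> e/2"
      using diffi[of "e/2"] e by auto
    show "\<exists>no. \<forall>k\<ge>no. norm (ip (\<lambda>x. s (r k) x - u x) (\<lambda>x. s (r k) x - u x) - 0) < e"
    proof (intro exI allI impI)
      fix k assume "k \<ge> N"
      then have "ip (\<lambda>x. s (r k) x - u x) (\<lambda>x. s (r k) x - u x) \<le> e/2"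
        using N by (simp add: ip_def power2_eq_square)
      then show "norm (ip (\<lambda>x. s (r k) x - u x) (\<lambda>x. s (r k) x - u x) - 0) < e"
        using e ip_nonneg[of "\<lambda>x. s (r k) x - u x"] by simp
    qed
  qed
  then show ?thesis using that[OF r uL2] unfolding s_def by simp
qed

end
end

lemma sq_tendsto:
  fixes X Y :: "nat \<Rightarrow> real"
  assumes b: "\<And>k. (X k)^2 \<le> Y k * C" and Y: "Y \<longlonglongrightarrow> 0"
  shows "X \<longlonglongrightarrow> 0"
proof -
  have YC: "(\<lambda>k. Y k * C) \<longlonglongrightarrow> 0" using tendsto_mult[OF Y tendsto_const[of C]] by simp
  have "(\<lambda>k. (X k)^2) \<longlonglongrightarrow> 0"
    by (rule tendsto_sandwich[OF _ _ tendsto_const YC]) (use b in auto)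
  then have "(\<lambda>k. sqrt ((X k)^2)) \<longlonglongrightarrow> sqrt 0" by (rule tendsto_real_sqrt)
  then have "(\<lambda>k. \<bar>X k\<bar>) \<longlonglongrightarrow> 0" by simp
  then show ?thesis by (simp add: tendsto_rabs_zero_iff)
qed

lemma real_key:
  fixes a qk qf l :: real
  assumes "0 \<le> a" "0 \<le> qk" "0 \<le> qf" "0 \<le> l" "a^2 \<le> qk * qf" "l * qk \<le> a"
  shows "l * a \<le> qf"
proof (cases "a = 0")
  case True then show ?thesis using assms by simp
next
  case False
  with assms have a: "a > 0" by simp
  have "l * (a * a) \<le> l * (qk * qf)" using assms by (intro mult_left_mono) (auto simp: power2_eq_square)
  also have "\<dots> = (l * qk) * qf" by simp
  also have "\<dots> \<le> a * qf" using assms by (intro mult_right_mono) auto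
  finally have "a * (l * a) \<le> a * qf" by (simp add: algebra_simps)
  then show ?thesis using a by simp
qed

context MRW begin

lemma lap_ae: assumes u: "L2 \<nu> u" shows "AE x in \<nu>. laplacian_m m u x = - Dop u x"
  using ae_int_m[OF u]
proof eventually_elim
  case (elim x)
  interpret prob_space "m x" by (rule prob_m)
  have "laplacian_m m u x = (\<integral>y. u y \<partial>m x) - (\<integral>y. u x \<partial>m x)"
    unfolding laplacian_m_def using elim by (intro Bochner_Integration.integral_diff) auto
  moreover have "prob UNIV = 1" using prob_space by simp
  ultimately show ?case by (simp add: Dop_def Mop_def)
qed

lemma ip_swap_diff: "ip (\<lambda>x. a x - b x) (\<lambda>x. a x - b x) = ip (\<lambda>x. b x - a x) (\<lambda>x. b x - a x)"
  unfolding ip_def by (simp add: algebra_simps)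

lemma ip_diff_right: "L2 \<nu> u \<Longrightarrow> L2 \<nu> v \<Longrightarrow> L2 \<nu> w \<Longrightarrow> ip w (\<lambda>x. u x - v x) = ip w u - ip w v"
  using ip_diff[of u v w] by (simp add: ip_sym)

lemma ip_zero: "L2 \<nu> z \<Longrightarrow> ip z z = 0 \<Longrightarrow> AE x in \<nu>. z x = 0"
proof -
  assume z: "L2 \<nu> z" and "ip z z = 0"
  then have "(\<integral>x. (z x)^2 \<partial>\<nu>) = 0" by (simp add: ip_def power2_eq_square)
  then have "AE x in \<nu>. (z x)^2 = 0"
    using integral_nonneg_eq_0_iff_AE[OF L2_sq[OF z]] by simp
  then show ?thesis by simp
qed

context
  fixes g assumes g: "L2 \<nu> g"
begin

lemma bb_sub:
  assumes "bb g \<longlonglongrightarrow> \<beta>"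
  shows "(\<lambda>n. bb g (2*n)) \<longlonglongrightarrow> \<beta>" "(\<lambda>n. bb g (Suc n)) \<longlonglongrightarrow> \<beta>" "(\<lambda>n. bb g (Suc (2*n))) \<longlonglongrightarrow> \<beta>"
proof -
  have "strict_mono (\<lambda>n::nat. 2*n)" "strict_mono (\<lambda>n::nat. Suc n)" "strict_mono (\<lambda>n::nat. Suc (2*n))"
    by (auto simp: strict_mono_def)
  then show "(\<lambda>n. bb g (2*n)) \<longlonglongrightarrow> \<beta>" "(\<lambda>n. bb g (Suc n)) \<longlonglongrightarrow> \<beta>" "(\<lambda>n. bb g (Suc (2*n))) \<longlonglongrightarrow> \<beta>"
    using LIMSEQ_subseq_LIMSEQ[OF assms] by (auto simp: comp_def)
qed

lemma ip_Dop_Tn: "L2 \<nu> w \<Longrightarrow> ip (Dop (Tn n g)) w = 2 * (ip (Tn n g) w - ip (Tn (Suc n) g) w)"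
proof -
  assume w: "L2 \<nu> w"
  have "ip (Dop (Tn n g)) w = ip (\<lambda>x. 2 * (Tn n g x - Tn (Suc n) g x)) w" by (simp only: Dop_Tn)
  also have "\<dots> = 2 * ip (\<lambda>x. Tn n g x - Tn (Suc n) g x) w"
    by (rule ip_scale[OF L2_diff[OF Tn_L2[OF g] Tn_L2[OF g]] w])
  also have "ip (\<lambda>x. Tn n g x - Tn (Suc n) g x) w = ip (Tn n g) w - ip (Tn (Suc n) g) w"
    by (rule ip_diff[OF Tn_L2[OF g] Tn_L2[OF g] w])
  finally show ?thesis .
qed

lemma bb_zero:
  assumes erg: "ergodic m \<nu>" and mean: "(\<integral>x. g x \<partial>\<nu>) = 0"
  shows "bb g \<longlonglongrightarrow> 0"
proof -
  obtain \<beta> where lim: "bb g \<longlonglongrightarrow> \<beta>" using bb_conv[OF g] by blast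
  obtain r u where r: "strict_mono r" and u: "L2 \<nu> u"
    and Y: "(\<lambda>k. ip (\<lambda>x. Tn (r k) g x - u x) (\<lambda>x. Tn (r k) g x - u x)) \<longlonglongrightarrow> 0"
    using limit_fun[OF g] by blast
  define s where "s n = Tn n g" for n
  have sL2: "L2 \<nu> (s n)" for n unfolding s_def by (rule Tn_L2[OF g])
  define z where "z = Dop u"
  have z: "L2 \<nu> z" unfolding z_def by (rule Dop_L2[OF u])
  have Dz: "L2 \<nu> (Dop z)" by (rule Dop_L2[OF z])
  have decomp: "ip z z = ip (\<lambda>x. u x - s (r k) x) (Dop z)
      + 2 * (ip (s (r k)) z - ip (s (Suc (r k))) z)" for k
  proof -
    have "ip z z = Q u z" unfolding z_def by (rule Q_D[OF u Dop_L2[OF u]])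
    also have "\<dots> = Q z u" by (rule Q_sym[OF u z])
    also have "\<dots> = ip (Dop z) u" by (rule Q_D[OF z u, symmetric])
    also have "\<dots> = ip u (Dop z)" by (rule ip_sym)
    also have "\<dots> = ip (\<lambda>x. u x - s (r k) x) (Dop z) + ip (s (r k)) (Dop z)"
      using ip_diff[OF u sL2 Dz, of "r k"] by simp
    also have "ip (s (r k)) (Dop z) = ip (Dop z) (s (r k))" by (rule ip_sym)
    also have "\<dots> = Q z (s (r k))" by (rule Q_D[OF z sL2])
    also have "\<dots> = Q (s (r k)) z" by (rule Q_sym[OF z sL2])
    also have "\<dots> = ip (Dop (s (r k))) z" by (rule Q_D[OF sL2 z, symmetric])
    also have "\<dots> = 2 * (ip (s (r k)) z - ip (s (Suc (r k))) z)"
      unfolding s_def by (rule ip_Dop_Tn[OF z])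
    finally show ?thesis .
  qed
  define X where "X k = ip (\<lambda>x. u x - s (r k) x) (Dop z)" for k
  define W where "W k = ip (\<lambda>x. s (r k) x - s (Suc (r k)) x) z" for k
  have XW: "ip z z = X k + 2 * W k" for k
    unfolding X_def W_def using decomp[of k] ip_diff[OF sL2 sL2 z, of "r k" "Suc (r k)"] by simp
  have X0: "X \<longlonglongrightarrow> 0"
  proof (rule sq_tendsto)
    fix k
    have "(X k)^2 \<le> ip (\<lambda>x. u x - s (r k) x) (\<lambda>x. u x - s (r k) x) * ip (Dop z) (Dop z)"
      unfolding X_def by (rule ip_CS[OF L2_diff[OF u sL2] Dz])
    then show "(X k)^2 \<le> ip (\<lambda>x. s (r k) x - u x) (\<lambda>x. s (r k) x - u x) * ip (Dop z) (Dop z)"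
      by (simp only: ip_swap_diff)
  next
    show "(\<lambda>k. ip (\<lambda>x. s (r k) x - u x) (\<lambda>x. s (r k) x - u x)) \<longlonglongrightarrow> 0" using Y by (simp add: s_def)
  qed
  have V: "(\<lambda>n. bb g (2*n) - 2 * bb g (n + Suc n) + bb g (2 * Suc n)) \<longlonglongrightarrow> \<beta> - 2 * \<beta> + \<beta>"
  proof -
    have a: "(\<lambda>n. bb g (n + Suc n)) \<longlonglongrightarrow> \<beta>" using bb_sub(3)[OF lim] by (simp add: mult_2)
    have b: "(\<lambda>n. bb g (2 * Suc n)) \<longlonglongrightarrow> \<beta>"
      using LIMSEQ_Suc[OF bb_sub(1)[OF lim]] by simp
    show ?thesis by (intro tendsto_intros bb_sub(1)[OF lim] a b)
  qed
  have W0: "W \<longlonglongrightarrow> 0"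
  proof (rule sq_tendsto)
    fix k
    show "(W k)^2 \<le> (bb g (2*(r k)) - 2 * bb g (r k + Suc (r k)) + bb g (2 * Suc (r k))) * ip z z"
      unfolding W_def using ip_CS[OF L2_diff[OF sL2 sL2] z, of "r k" "Suc (r k)"]
        ip_Tn_diff[OF g, of "r k" "Suc (r k)"] by (simp add: s_def)
  next
    show "(\<lambda>k. bb g (2*(r k)) - 2 * bb g (r k + Suc (r k)) + bb g (2 * Suc (r k))) \<longlonglongrightarrow> 0"
      using LIMSEQ_subseq_LIMSEQ[OF V r] by (simp add: comp_def)
  qed
  have "(\<lambda>k. X k + 2 * W k) \<longlonglongrightarrow> 0 + 2 * 0" by (intro tendsto_intros X0 W0)
  then have "(\<lambda>k. ip z z) \<longlonglongrightarrow> 0" using XW by simp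
  then have zz: "ip z z = 0" using LIMSEQ_unique tendsto_const by blast
  have aez: "AE x in \<nu>. z x = 0" by (rule ip_zero[OF z zz])
  have "AE x in \<nu>. laplacian_m m u x = 0"
    using lap_ae[OF u] aez by eventually_elim (simp add: z_def)
  with erg u obtain c where c: "AE x in \<nu>. u x = c" unfolding ergodic_def by blast
  have intu: "(\<integral>x. u x \<partial>\<nu>) = c"
  proof -
    have "(\<integral>x. u x \<partial>\<nu>) = (\<integral>x. c \<partial>\<nu>)"
      using c u L2_const[of c] by (intro integral_cong_AE) (auto simp: L2_def)
    also have "\<dots> = c" using prob_space.prob_space[OF P] by simp
    finally show ?thesis .
  qed
  have ints: "(\<integral>x. s n x \<partial>\<nu>) = 0" for n unfolding s_def using Tn_mean[OF g] mean by simp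
  have Xc: "ip (\<lambda>x. u x - s (r k) x) (\<lambda>x. 1) = c" for k
  proof -
    have "ip (\<lambda>x. u x - s (r k) x) (\<lambda>x. 1) = (\<integral>x. u x - s (r k) x \<partial>\<nu>)" by (simp add: ip_def)
    also have "\<dots> = (\<integral>x. u x \<partial>\<nu>) - (\<integral>x. s (r k) x \<partial>\<nu>)"
      by (rule Bochner_Integration.integral_diff[OF L2_int[OF u] L2_int[OF sL2]])
    finally show ?thesis using intu ints by simp
  qed
  have "(\<lambda>k. ip (\<lambda>x. u x - s (r k) x) (\<lambda>x. 1)) \<longlonglongrightarrow> 0"
  proof (rule sq_tendsto)
    fix k
    have "(ip (\<lambda>x. u x - s (r k) x) (\<lambda>x. 1))^2 \<le> ip (\<lambda>x. u x - s (r k) x) (\<lambda>x. u x - s (r k) x) * ip (\<lambda>x. 1) (\<lambda>x. 1)"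
      by (rule ip_CS[OF L2_diff[OF u sL2] L2_const])
    then show "(ip (\<lambda>x. u x - s (r k) x) (\<lambda>x. 1))^2 \<le> ip (\<lambda>x. s (r k) x - u x) (\<lambda>x. s (r k) x - u x) * ip (\<lambda>x. 1) (\<lambda>x. 1)"
      by (simp only: ip_swap_diff)
  next
    show "(\<lambda>k. ip (\<lambda>x. s (r k) x - u x) (\<lambda>x. s (r k) x - u x)) \<longlonglongrightarrow> 0" using Y by (simp add: s_def)
  qed
  then have "(\<lambda>k. c) \<longlonglongrightarrow> 0" using Xc by simp
  then have c0: "c = 0" using LIMSEQ_unique tendsto_const by blast
  have ss: "ip (\<lambda>x. s (r k) x - u x) (\<lambda>x. s (r k) x - u x) = bb g (2 * r k)" for k
  proof -
    have ae: "AE x in \<nu>. s (r k) x - u x = s (r k) x" using c c0 by auto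
    have "ip (\<lambda>x. s (r k) x - u x) (\<lambda>x. s (r k) x - u x) = ip (s (r k)) (\<lambda>x. s (r k) x - u x)"
      by (rule ip_cong_AE[OF L2_diff[OF sL2 u] sL2 L2_diff[OF sL2 u] ae])
    also have "\<dots> = ip (\<lambda>x. s (r k) x - u x) (s (r k))" by (rule ip_sym)
    also have "\<dots> = ip (s (r k)) (s (r k))"
      by (rule ip_cong_AE[OF L2_diff[OF sL2 u] sL2 sL2 ae])
    also have "\<dots> = bb g (2 * r k)" unfolding s_def using bb_ip[OF g, of "r k" "r k"] by (simp add: mult_2)
    finally show ?thesis .
  qed
  have "(\<lambda>k. bb g (2 * r k)) \<longlonglongrightarrow> 0" using Y ss by (simp add: s_def)
  moreover have "(\<lambda>k. bb g (2 * r k)) \<longlonglongrightarrow> \<beta>"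
    using LIMSEQ_subseq_LIMSEQ[OF bb_sub(1)[OF lim] r] by (simp add: comp_def)
  ultimately have "\<beta> = 0" using LIMSEQ_unique by blast
  then show ?thesis using lim by simp
qed

end
end

context MRW begin

primrec kk :: "('a \<Rightarrow> real) \<Rightarrow> nat \<Rightarrow> 'a \<Rightarrow> real" where
  "kk g 0 = (\<lambda>x. 0)"
| "kk g (Suc n) = (\<lambda>x. kk g n x + 1/2 * Tn n g x)"

lemma kk_L2: "L2 \<nu> g \<Longrightarrow> L2 \<nu> (kk g n)"
proof (induction n)
  case 0 then show ?case using L2_const[of 0] by simp
next
  case (Suc n)
  have "L2 \<nu> (\<lambda>x. 1 * kk g n x + 1/2 * Tn n g x)" by (rule L2_lin[OF Suc.IH[OF Suc.prems] Tn_L2[OF Suc.prems]])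
  then show ?case by simp
qed

lemma kk_D: "L2 \<nu> g \<Longrightarrow> AE x in \<nu>. Dop (kk g n) x = g x - Tn n g x"
proof (induction n)
  case 0 then show ?case by (simp add: Dop_def Mop_def)
next
  case (Suc n)
  have ml: "AE x in \<nu>. Mop (\<lambda>y. 1 * kk g n y + 1/2 * Tn n g y) x = 1 * Mop (kk g n) x + 1/2 * Mop (Tn n g) x"
    by (rule Mop_lin[OF kk_L2[OF Suc.prems] Tn_L2[OF Suc.prems]])
  from Suc.IH[OF Suc.prems] ml show ?case
  proof eventually_elim
    case (elim x)
    have e1: "Mop (kk g (Suc n)) x = Mop (kk g n) x + 1/2 * Mop (Tn n g) x" using elim(2) by simp
    have e2: "kk g n x - Mop (kk g n) x = g x - Tn n g x" using elim(1) by (simp add: Dop_def)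
    have "Dop (kk g (Suc n)) x = kk g n x + 1/2 * Tn n g x - (Mop (kk g n) x + 1/2 * Mop (Tn n g) x)"
      unfolding Dop_def e1 by simp
    also have "\<dots> = g x - (Tn n g x + Mop (Tn n g) x) / 2" using e2 by (simp add: field_simps)
    finally show ?case by (simp add: Top_def)
  qed
qed

context
  fixes g assumes g: "L2 \<nu> g"
begin

lemma dir2_core:
  assumes erg: "ergodic m \<nu>" and mean: "(\<integral>x. g x \<partial>\<nu>) = 0" and l: "l \<ge> 0"
    and cond: "\<And>h. L2 \<nu> h \<Longrightarrow> l * Q h h \<le> ip (Dop h) (Dop h)"
  shows "l * ip g g \<le> Q g g"
proof -
  have b0: "bb g \<longlonglongrightarrow> 0" by (rule bb_zero[OF g erg mean])
  have ineq: "l * (ip g g - 2 * bb g n + bb g (2*n)) \<le>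
      Q g g - 4 * (bb g n - bb g (Suc n)) + 2 * (bb g (2*n) - bb g (Suc (2*n)))" for n
  proof -
    define s where "s = Tn n g"
    define f where "f = (\<lambda>x. g x - s x)"
    define k where "k = kk g n"
    have s: "L2 \<nu> s" unfolding s_def by (rule Tn_L2[OF g])
    have s': "L2 \<nu> (Tn (Suc n) g)" by (rule Tn_L2[OF g])
    have f: "L2 \<nu> f" unfolding f_def by (rule L2_diff[OF g s])
    have k: "L2 \<nu> k" unfolding k_def by (rule kk_L2[OF g])
    have aeD: "AE x in \<nu>. Dop k x = f x" unfolding k_def f_def s_def by (rule kk_D[OF g])
    have Dk: "L2 \<nu> (Dop k)" by (rule Dop_L2[OF k])
    define a where "a = ip f f"
    have eq1: "ip (Dop k) (Dop k) = a"
    proof -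
      have "ip (Dop k) (Dop k) = ip f (Dop k)" by (rule ip_cong_AE[OF Dk f Dk aeD])
      also have "\<dots> = ip (Dop k) f" by (rule ip_sym)
      also have "\<dots> = ip f f" by (rule ip_cong_AE[OF Dk f f aeD])
      finally show ?thesis by (simp add: a_def)
    qed
    have eq2: "Q k f = a"
      using Q_D[OF k f] ip_cong_AE[OF Dk f f aeD] by (simp add: a_def)
    have cs: "(Q k f)^2 \<le> Q k k * Q f f" by (rule Q_CS[OF k f])
    have ck: "l * Q k k \<le> a" using cond[OF k] eq1 by simp
    have key: "l * a \<le> Q f f"
      by (rule real_key[of a "Q k k" "Q f f" l]) (use ip_nonneg Q_nonneg[OF k] Q_nonneg[OF f] l cs eq2 ck a_def in auto)
    have gs: "ip g s = bb g n" unfolding s_def bb_def[OF g] ..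
    have sg: "ip s g = bb g n" using gs by (simp add: ip_sym)
    have ss: "ip s s = bb g (2*n)" unfolding s_def using bb_ip[OF g, of n n] by (simp add: mult_2)
    have s'g: "ip (Tn (Suc n) g) g = bb g (Suc n)" using bb_def[OF g, of "Suc n"] by (simp add: ip_sym)
    have s's: "ip (Tn (Suc n) g) s = bb g (Suc (2*n))" unfolding s_def using bb_ip[OF g, of "Suc n" n] by (simp add: mult_2)
    have aval: "a = ip g g - 2 * bb g n + bb g (2*n)"
    proof -
      have "a = ip g f - ip s f" unfolding a_def f_def by (rule ip_diff[OF g s f[unfolded f_def]])
      moreover have "ip g f = ip g g - ip g s" unfolding f_def by (rule ip_diff_right[OF g s g])
      moreover have "ip s f = ip s g - ip s s" unfolding f_def by (rule ip_diff_right[OF g s s])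
      ultimately show ?thesis using gs sg ss by simp
    qed
    have Qsg: "Q s g = 2 * (bb g n - bb g (Suc n))"
      using Q_D[OF s g] ip_Dop_Tn[OF g g, of n] sg s'g by (simp add: s_def)
    have Qss: "Q s s = 2 * (bb g (2*n) - bb g (Suc (2*n)))"
      using Q_D[OF s s] ip_Dop_Tn[OF g s, of n] ss s's by (simp add: s_def)
    have Qff: "Q f f = Q g g - 2 * Q s g + Q s s"
    proof -
      have ml: "AE x in \<nu>. Mop (\<lambda>y. 1 * g y + (-1) * s y) x = 1 * Mop g x + (-1) * Mop s x"
        by (rule Mop_lin[OF g s])
      have aeDf: "AE x in \<nu>. Dop f x = Dop g x - Dop s x"
        using ml by eventually_elim (simp add: Dop_def f_def)
      have Dg: "L2 \<nu> (Dop g)" and Ds: "L2 \<nu> (Dop s)" and Df: "L2 \<nu> (Dop f)"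
        using Dop_L2 g s f by auto
      have "Q f f = ip (Dop f) f" by (rule Q_D[OF f f, symmetric])
      also have "\<dots> = ip (\<lambda>x. Dop g x - Dop s x) f" by (rule ip_cong_AE[OF Df L2_diff[OF Dg Ds] f aeDf])
      also have "\<dots> = ip (Dop g) f - ip (Dop s) f" by (rule ip_diff[OF Dg Ds f])
      also have "ip (Dop g) f = ip (Dop g) g - ip (Dop g) s" unfolding f_def by (rule ip_diff_right[OF g s Dg])
      also have "ip (Dop s) f = ip (Dop s) g - ip (Dop s) s" unfolding f_def by (rule ip_diff_right[OF g s Ds])
      finally have "Q f f = Q g g - Q g s - (Q s g - Q s s)"
        using Q_D[OF g g] Q_D[OF g s] Q_D[OF s g] Q_D[OF s s] by simp
      then show ?thesis using Q_sym[OF g s] by simp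
    qed
    show ?thesis using key aval Qff Qsg Qss by simp
  qed
  have L: "(\<lambda>n. l * (ip g g - 2 * bb g n + bb g (2*n))) \<longlonglongrightarrow> l * (ip g g - 2 * 0 + 0)"
    by (intro tendsto_intros b0 bb_sub(1)[OF g b0])
  have R: "(\<lambda>n. Q g g - 4 * (bb g n - bb g (Suc n)) + 2 * (bb g (2*n) - bb g (Suc (2*n))))
      \<longlonglongrightarrow> Q g g - 4 * (0 - 0) + 2 * (0 - 0)"
    by (intro tendsto_intros b0 bb_sub[OF g b0])
  have "l * (ip g g - 2 * 0 + 0) \<le> Q g g - 4 * (0 - 0) + 2 * (0 - 0)"
    by (rule tendsto_le[OF trivial_limit_sequentially R L]) (use ineq in simp)
  then show ?thesis by simp
qed

end

lemma dir2:
  assumes erg: "ergodic m \<nu>" and l: "l \<ge> 0"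
    and cond: "\<forall>f. L2 \<nu> f \<longrightarrow> l * H_m m \<nu> f \<le> (\<integral>x. (laplacian_m m f x)^2 \<partial>\<nu>)"
    and f: "L2 \<nu> f" and V: "Var_nu \<nu> f \<noteq> 0"
  shows "l \<le> H_m m \<nu> f / Var_nu \<nu> f"
proof -
  define c where "c = (\<integral>x. f x \<partial>\<nu>)"
  define g where "g = (\<lambda>x. f x - c)"
  have g: "L2 \<nu> g" unfolding g_def by (rule L2_diff[OF f L2_const])
  have mean: "(\<integral>x. g x \<partial>\<nu>) = 0"
  proof -
    have "(\<integral>x. g x \<partial>\<nu>) = (\<integral>x. f x \<partial>\<nu>) - (\<integral>x. c \<partial>\<nu>)"
      unfolding g_def by (rule Bochner_Integration.integral_diff[OF L2_int[OF f] finite_measure.integrable_const[OF finite_nu]])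
    then show ?thesis using prob_space.prob_space[OF P] by (simp add: c_def)
  qed
  have Vg: "Var_nu \<nu> f = ip g g" unfolding Var_eq g_def c_def ..
  have Hg: "H_m m \<nu> f = Q g g"
  proof -
    have "H_m m \<nu> f = H_m m \<nu> g" unfolding H_m_def g_def by simp
    then show ?thesis using H_eq[OF g] by simp
  qed
  have cond': "l * Q h h \<le> ip (Dop h) (Dop h)" if h: "L2 \<nu> h" for h
  proof -
    have "l * H_m m \<nu> h \<le> (\<integral>x. (laplacian_m m h x)^2 \<partial>\<nu>)" using cond h by blast
    then show ?thesis using H_eq[OF h] lap_eq[OF h] by simp
  qed
  have "l * ip g g \<le> Q g g" by (rule dir2_core[OF g erg mean l cond'])
  moreover have "ip g g > 0" using ip_nonneg[of g] V Vg by simp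
  ultimately show ?thesis using Vg Hg by (simp add: pos_le_divide_eq mult.commute)
qed

lemma dir1:
  assumes gam: "\<gamma> \<ge> 0" and le: "\<And>f. L2 \<nu> f \<Longrightarrow> Var_nu \<nu> f \<noteq> 0 \<Longrightarrow> \<gamma> \<le> H_m m \<nu> f / Var_nu \<nu> f"
    and u: "L2 \<nu> u"
  shows "\<gamma> * H_m m \<nu> u \<le> (\<integral>x. (laplacian_m m u x)^2 \<partial>\<nu>)"
proof -
  define c where "c = (\<integral>x. u x \<partial>\<nu>)"
  define g where "g = (\<lambda>x. u x - c)"
  have g: "L2 \<nu> g" unfolding g_def by (rule L2_diff[OF u L2_const])
  have Vg: "Var_nu \<nu> u = ip g g" unfolding Var_eq g_def c_def ..
  have Du: "L2 \<nu> (Dop u)" by (rule Dop_L2[OF u])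
  have gv: "\<gamma> * Var_nu \<nu> u \<le> Q u u"
  proof (cases "Var_nu \<nu> u = 0")
    case True then show ?thesis using Q_nonneg[OF u] by simp
  next
    case False
    then have pos: "Var_nu \<nu> u > 0" using ip_nonneg[of g] Vg by simp
    have "\<gamma> \<le> H_m m \<nu> u / Var_nu \<nu> u" by (rule le[OF u False])
    then show ?thesis using pos H_eq[OF u] by (simp add: pos_le_divide_eq mult.commute)
  qed
  have qd: "Q u u = ip (Dop u) g"
  proof -
    have "ip (Dop u) g = ip (Dop u) u - ip (Dop u) (\<lambda>x. c)"
      unfolding g_def by (rule ip_diff_right[OF u L2_const Du])
    moreover have "ip (Dop u) (\<lambda>x. c) = c * (\<integral>x. Dop u x \<partial>\<nu>)" by (simp add: ip_def mult.commute)
    ultimately show ?thesis using Dop_mean[OF u] Q_D[OF u u] by simp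
  qed
  have cs: "(Q u u)^2 \<le> Var_nu \<nu> u * ip (Dop u) (Dop u)"
    using ip_CS[OF Du g] qd Vg by (simp add: mult.commute)
  have "\<gamma> * Q u u \<le> ip (Dop u) (Dop u)"
    by (rule real_key[of "Q u u" "Var_nu \<nu> u" "ip (Dop u) (Dop u)" \<gamma>])
       (use Q_nonneg[OF u] ip_nonneg Vg gam cs gv in auto)
  then show ?thesis using H_eq[OF u] lap_eq[OF u] by simp
qed

end

theorem theorem3p17:
  fixes m :: "'a::polish_space \<Rightarrow> 'a measure" and \<nu> :: "'a measure"
  assumes "mrw_space m"
    and "prob_space \<nu>"
    and "invariant_measure m \<nu>"
    and "reversible_measure m \<nu>"
    and "ergodic m \<nu>"
  shows "gap m \<nu> = Sup {ereal l | l. l \<ge> 0 \<and>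
           (\<forall>f. L2 \<nu> f \<longrightarrow> l * H_m m \<nu> f \<le> (\<integral>x. (laplacian_m m f x)^2 \<partial>\<nu>))}"
proof -
  interpret MRW m \<nu> by (rule MRW.intro) (use assms in auto)
  define S where "S = {ereal (H_m m \<nu> f / Var_nu \<nu> f) | f. L2 \<nu> f \<and> Var_nu \<nu> f \<noteq> 0}"
  define R where "R = {ereal l | l. l \<ge> 0 \<and>
           (\<forall>f. L2 \<nu> f \<longrightarrow> l * H_m m \<nu> f \<le> (\<integral>x. (laplacian_m m f x)^2 \<partial>\<nu>))}"
  have gapS: "gap m \<nu> = Inf S" unfolding gap_def S_def ..
  have SR: "Sup R \<le> Inf S"
  proof (rule Sup_least)
    fix y assume "y \<in> R"
    then obtain l where y: "y = ereal l" and l: "l \<ge> 0"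
      and cond: "\<forall>f. L2 \<nu> f \<longrightarrow> l * H_m m \<nu> f \<le> (\<integral>x. (laplacian_m m f x)^2 \<partial>\<nu>)"
      unfolding R_def by blast
    show "y \<le> Inf S"
    proof (rule Inf_greatest)
      fix x assume "x \<in> S"
      then obtain f where x: "x = ereal (H_m m \<nu> f / Var_nu \<nu> f)" and f: "L2 \<nu> f" and V: "Var_nu \<nu> f \<noteq> 0"
        unfolding S_def by blast
      show "y \<le> x" unfolding x y using dir2[OF assms(5) l cond f V] by simp
    qed
  qed
  have S0: "0 \<le> Inf S"
  proof (rule Inf_greatest)
    fix x assume "x \<in> S"
    then obtain f where x: "x = ereal (H_m m \<nu> f / Var_nu \<nu> f)" and f: "L2 \<nu> f"
      unfolding S_def by blast
    have "0 \<le> H_m m \<nu> f" using H_eq[OF f] Q_nonneg[OF f] by simp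
    moreover have "0 \<le> Var_nu \<nu> f" using Var_eq ip_nonneg by simp
    ultimately show "0 \<le> x" unfolding x by simp
  qed
  have A: "ereal \<gamma> \<in> R" if gam: "\<gamma> \<ge> 0" and le: "ereal \<gamma> \<le> Inf S" for \<gamma>
  proof -
    have "\<gamma> \<le> H_m m \<nu> f / Var_nu \<nu> f" if f: "L2 \<nu> f" and V: "Var_nu \<nu> f \<noteq> 0" for f
    proof -
      have "Inf S \<le> ereal (H_m m \<nu> f / Var_nu \<nu> f)" by (rule Inf_lower) (use f V in \<open>auto simp: S_def\<close>)
      with le have "ereal \<gamma> \<le> ereal (H_m m \<nu> f / Var_nu \<nu> f)" by (rule order_trans)
      then show ?thesis by simp
    qed
    then have "\<forall>f. L2 \<nu> f \<longrightarrow> \<gamma> * H_m m \<nu> f \<le> (\<integral>x. (laplacian_m m f x)^2 \<partial>\<nu>)"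
      using dir1[OF gam] by blast
    then show ?thesis unfolding R_def using gam by blast
  qed
  have RS: "Inf S \<le> Sup R"
  proof (cases "Inf S")
    case (real \<gamma>)
    then have "\<gamma> \<ge> 0" using S0 by simp
    then have "ereal \<gamma> \<in> R" using A real by simp
    then show ?thesis using real by (simp add: Sup_upper)
  next
    case PInf
    have "Sup R = \<infinity>"
    proof (rule ereal_top)
      fix B :: real
      have "ereal (max B 0) \<in> R" by (rule A) (simp_all add: PInf)
      then have "ereal (max B 0) \<le> Sup R" by (rule Sup_upper)
      then show "ereal B \<le> Sup R" by (rule order_trans[rotated]) simp
    qed
    then show ?thesis by simp
  next
    case MInf
    then show ?thesis using S0 by simp
  qed
  show ?thesis unfolding gapS R_def[symmetric] using SR RS by (rule antisym[rotated])
qed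

end
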